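(* Assume (A1), (A2'), and $\alpha\ge\frac12\max\{0,\max_{j\in\Gamma_h}(V(x_j)+\omega)\}+\frac12$. For fixed $h$, let $u_h^*$ be a discrete ground state satisfying the discrete non-degeneracy condition (NDh). Then there exists $\delta_0>0$ such that for every initial datum $u_h^0\in U_{h,\delta_0}(u_h^* )\cap\mathcal S_{h,p+1}$ and every $\tau>0$, the fully discrete GFALM iterates satisfy $$\|u_h^n-u_h^*\|_{1,h}\le Ce^{-an\tau/(1+\tau)}\qquad\forall n\in\mathbb N,$$ with constants $C,a>0$ independent of $n$ and $\tau$.
   Context: Fully discrete setting ($d=1$), real-valued grid functions. $\Omega=[x_0,x_0+L]$, $M>0$ even, $h=L/M$, grid $x_j=x_0+jh$, $j\in\Gamma_h=\{0,\dots,M-1\}$, periodic; $X_h=\mathbb R^M$. $\varphi_j(x)=\frac1M\sum_{l=-M/2}^{M/2}\frac1{a_l}e^{\mathrm il\sigma(x-x_j)}$, $a_l=1$ ($|l|<M/2$), $a_l=2$ ($|l|=M/2$), $\sigma=2\pi/L$; $(\mathbf D_{xx})_{j,l}=\varphi_l''(x_j)$. $\langle u_h,v_h\rangle_h=h\sum_ju_jv_j$, $\|u_h\|_h^2=\langle u_h,u_h\rangle_h$, $|u_h|_{1,h}^2=\langle-\mathbf D_{xx}u_h,u_h\rangle_h$, $\|u_h\|_{1,h}^2=\|u_h\|_h^2+|u_h|_{1,h}^2$, $\|u_h\|_{h,q}=(h\sum_j|u_j|^q)^{1/q}$. $V_j=V(x_j)$; $Q_h(u_h)=\frac12|u_h|_{1,h}^2+h\sum_jV_j|u_j|^2+\omega\|u_h\|_h^2$;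 $(\mathcal A_hu_h)_j=-\frac12(\mathbf D_{xx}u_h)_j+(V_j+\omega)u_j$. $\mathcal S_{h,p+1}=\{u_h:\|u_h\|_{h,p+1}=1\}$; $\widetilde\lambda_h(u_h)=Q_h(u_h)/\|u_h\|_{h,p+1}^{p+1}$. (A1): $1<p<\infty$, $V\ge0$ bounded. $\lambda_0':=\inf\{\frac12|u_h|_{1,h}^2+h\sum_jV_j|u_j|^2:\|u_h\|_h=1\}$; (A2'): $\omega>-\lambda_0'$. A discrete ground state is $u_h^*\in\arg\min\{Q_h:u_h\in\mathcal S_{h,p+1}\}$ with $(\mathcal A_hu_h^* )_j=\lambda^*|u_j^*|^{p-1}u_j^*$. $\mathcal T_{u_h^*,h}=\{\xi_h:\langle|u_h^*|^{p-1}u_h^*,\xi_h\rangle_h=0\}$. (NDh): there is $c>0$ with $\langle\mathcal A_h\xi_h,\xi_h\rangle_h-p\lambda^*\langle|u_h^*|^{p-1}\xi_h,\xi_h\rangle_h\ge c\|\xi_h\|_{1,h}^2$ for all $\xi_h\in\mathcal T_{u_h^*,h}$. $U_{h,\delta}(u_h^* )=\{u_h:\|u_h-u_h^*\|_{1,h}\le\delta\}$. Fully discrete GFALM: for $j\in\Gamma_h$, $\frac1\tau(\widetilde u_j^{n+1}-u_j^n)=-\widetilde\mu_j^{n+1}$, $\widetilde\mu_j^{n+1}=-\frac12(\mathbf D_{xx}\widetilde u_h^{n+1})_j+(V_j+\omega-\widetilde\lambda_h(u_h^n)|u_j^n|^{p-1})u_j^n+\alpha(\widetilde u_j^{n+1}-u_j^n)$,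 and $u_j^{n+1}=\widetilde u_j^{n+1}/\|\widetilde u_h^{n+1}\|_{h,p+1}$. *)

theory Defs
  imports "HOL-Analysis.Analysis"
begin

text \<open>Grid functions are
 real functions on nat; only the values at indices j < M (the grid Gamma_h) matter.
 Parameters: x0 (left endpoint), L (length), M (number of grid points).\<close>

definition hstep :: "real \<Rightarrow> nat \<Rightarrow> real" where
  "hstep L M = L / real M"

definition xgrid :: "real \<Rightarrow> real \<Rightarrow> nat \<Rightarrow> nat \<Rightarrow> real" where
  "xgrid x0 L M j = x0 + real j * hstep L M"

definition sigma :: "real \<Rightarrow> real" where
  "sigma L = 2 * pi / L"

definition acoef :: "nat \<Rightarrow> int \<Rightarrow> real" where
  "acoef M l = (if \<bar>l\<bar> = int M div 2 then 2 else 1)"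

definition phi :: "real \<Rightarrow> real \<Rightarrow> nat \<Rightarrow> nat \<Rightarrow> real \<Rightarrow> complex" where
  "phi x0 L M j x = (1 / of_nat M) *
     (\<Sum>l\<in>{-(int M div 2)..int M div 2}.
        of_real (1 / acoef M l) * exp (\<i> * of_real (real_of_int l * sigma L * (x - xgrid x0 L M j))))"

text \<open>(D_xx)_{j,l} = phi_l''(x_j).  This value is real; we take the real part.\<close>
definition Dxx :: "real \<Rightarrow> real \<Rightarrow> nat \<Rightarrow> nat \<Rightarrow> nat \<Rightarrow> real" where
  "Dxx x0 L M j l = Re (vector_derivative
      (\<lambda>y. vector_derivative (phi x0 L M l) (at y)) (at (xgrid x0 L M j)))"

definition Dxx_app :: "real \<Rightarrow> real \<Rightarrow> nat \<Rightarrow> (nat \<Rightarrow> real) \<Rightarrow> nat \<Rightarrow> real" where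
  "Dxx_app x0 L M u j = (\<Sum>l<M. Dxx x0 L M j l * u l)"

definition inner_h :: "real \<Rightarrow> nat \<Rightarrow> (nat \<Rightarrow> real) \<Rightarrow> (nat \<Rightarrow> real) \<Rightarrow> real" where
  "inner_h L M u v = hstep L M * (\<Sum>j<M. u j * v j)"

definition norm_h :: "real \<Rightarrow> nat \<Rightarrow> (nat \<Rightarrow> real) \<Rightarrow> real" where
  "norm_h L M u = sqrt (inner_h L M u u)"

definition semi1_h :: "real \<Rightarrow> real \<Rightarrow> nat \<Rightarrow> (nat \<Rightarrow> real) \<Rightarrow> real" where
  "semi1_h x0 L M u = sqrt (inner_h L M (\<lambda>j. - Dxx_app x0 L M u j) u)"

definition norm1_h :: "real \<Rightarrow> real \<Rightarrow> nat \<Rightarrow> (nat \<Rightarrow> real) \<Rightarrow> real" where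
  "norm1_h x0 L M u = sqrt ((norm_h L M u)\<^sup>2 + (semi1_h x0 L M u)\<^sup>2)"

definition normq_h :: "real \<Rightarrow> nat \<Rightarrow> real \<Rightarrow> (nat \<Rightarrow> real) \<Rightarrow> real" where
  "normq_h L M q u = (hstep L M * (\<Sum>j<M. \<bar>u j\<bar> powr q)) powr (1 / q)"

definition Q_h :: "real \<Rightarrow> real \<Rightarrow> nat \<Rightarrow> (real \<Rightarrow> real) \<Rightarrow> real \<Rightarrow> (nat \<Rightarrow> real) \<Rightarrow> real" where
  "Q_h x0 L M V \<omega> u = 1/2 * (semi1_h x0 L M u)\<^sup>2
      + hstep L M * (\<Sum>j<M. V (xgrid x0 L M j) * \<bar>u j\<bar>\<^sup>2) + \<omega> * (norm_h L M u)\<^sup>2"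

definition A_h :: "real \<Rightarrow> real \<Rightarrow> nat \<Rightarrow> (real \<Rightarrow> real) \<Rightarrow> real \<Rightarrow> (nat \<Rightarrow> real) \<Rightarrow> nat \<Rightarrow> real" where
  "A_h x0 L M V \<omega> u j = - 1/2 * Dxx_app x0 L M u j + (V (xgrid x0 L M j) + \<omega>) * u j"

definition S_h :: "real \<Rightarrow> nat \<Rightarrow> real \<Rightarrow> (nat \<Rightarrow> real) set" where
  "S_h L M p = {u. normq_h L M (p + 1) u = 1}"

definition lam_tilde :: "real \<Rightarrow> real \<Rightarrow> nat \<Rightarrow> (real \<Rightarrow> real) \<Rightarrow> real \<Rightarrow> real \<Rightarrow> (nat \<Rightarrow> real) \<Rightarrow> real" where
  "lam_tilde x0 L M V \<omega> p u = Q_h x0 L M V \<omega> u / (normq_h L M (p + 1) u) powr (p + 1)"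

definition lam0' :: "real \<Rightarrow> real \<Rightarrow> nat \<Rightarrow> (real \<Rightarrow> real) \<Rightarrow> real" where
  "lam0' x0 L M V = Inf {1/2 * (semi1_h x0 L M u)\<^sup>2
      + hstep L M * (\<Sum>j<M. V (xgrid x0 L M j) * \<bar>u j\<bar>\<^sup>2) | u. norm_h L M u = 1}"

definition discrete_ground_state ::
  "real \<Rightarrow> real \<Rightarrow> nat \<Rightarrow> (real \<Rightarrow> real) \<Rightarrow> real \<Rightarrow> real \<Rightarrow> (nat \<Rightarrow> real) \<Rightarrow> real \<Rightarrow> bool" where
  "discrete_ground_state x0 L M V \<omega> p us lam \<longleftrightarrow>
     us \<in> S_h L M p \<and> (\<forall>v\<in>S_h L M p. Q_h x0 L M V \<omega> us \<le> Q_h x0 L M V \<omega> v) \<and>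
     (\<forall>j<M. A_h x0 L M V \<omega> us j = lam * \<bar>us j\<bar> powr (p - 1) * us j)"

definition tangent_h :: "real \<Rightarrow> nat \<Rightarrow> real \<Rightarrow> (nat \<Rightarrow> real) \<Rightarrow> (nat \<Rightarrow> real) set" where
  "tangent_h L M p us = {\<xi>. inner_h L M (\<lambda>j. \<bar>us j\<bar> powr (p - 1) * us j) \<xi> = 0}"

definition NDh :: "real \<Rightarrow> real \<Rightarrow> nat \<Rightarrow> (real \<Rightarrow> real) \<Rightarrow> real \<Rightarrow> real \<Rightarrow> (nat \<Rightarrow> real) \<Rightarrow> real \<Rightarrow> bool" where
  "NDh x0 L M V \<omega> p us lam \<longleftrightarrow> (\<exists>c>0. \<forall>\<xi>\<in>tangent_h L M p us.
      inner_h L M (A_h x0 L M V \<omega> \<xi>) \<xi>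
        - p * lam * inner_h L M (\<lambda>j. \<bar>us j\<bar> powr (p - 1) * \<xi> j) \<xi>
      \<ge> c * (norm1_h x0 L M \<xi>)\<^sup>2)"

definition U_h :: "real \<Rightarrow> real \<Rightarrow> nat \<Rightarrow> real \<Rightarrow> (nat \<Rightarrow> real) \<Rightarrow> (nat \<Rightarrow> real) set" where
  "U_h x0 L M \<delta> us = {u. norm1_h x0 L M (\<lambda>j. u j - us j) \<le> \<delta>}"

text \<open>u, ut: sequences of grid functions; ut (Suc n) is the intermediate tilde-u^{n+1}.\<close>
definition GFALM_iter ::
  "real \<Rightarrow> real \<Rightarrow> nat \<Rightarrow> (real \<Rightarrow> real) \<Rightarrow> real \<Rightarrow> real \<Rightarrow> real \<Rightarrow> real
     \<Rightarrow> (nat \<Rightarrow> nat \<Rightarrow> real) \<Rightarrow> (nat \<Rightarrow> nat \<Rightarrow> real) \<Rightarrow> bool" where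
  "GFALM_iter x0 L M V \<omega> p \<alpha> \<tau> u ut \<longleftrightarrow>
     (\<forall>n. \<forall>j<M.
        (ut (Suc n) j - u n j) / \<tau> =
          - ( - 1/2 * Dxx_app x0 L M (ut (Suc n)) j
              + (V (xgrid x0 L M j) + \<omega> - lam_tilde x0 L M V \<omega> p (u n) * \<bar>u n j\<bar> powr (p - 1)) * u n j
              + \<alpha> * (ut (Suc n) j - u n j))
      \<and> u (Suc n) j = ut (Suc n) j / normq_h L M (p + 1) (ut (Suc n)))"

end

theory Submission
  imports Defs "HOL-Analysis.Analysis"
begin


lemma g_deriv:
  assumes p: "1 < (p::real)"
  shows "((\<lambda>y. \<bar>y\<bar> powr (p-1) * y) has_real_derivative (p * \<bar>x\<bar> powr (p-1))) (at x)"
proof (cases "x > 0")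
  case True
  have d: "((\<lambda>z. z powr p) has_real_derivative p * x powr (p - 1)) (at x)"
    by (rule has_real_derivative_powr[OF True])
  show ?thesis
  proof (rule has_field_derivative_transform_within_open[where S="{0<..}"])
    show "((\<lambda>z. z powr p) has_real_derivative p * \<bar>x\<bar> powr (p - 1)) (at x)" using d True by simp
    fix y :: real assume "y \<in> {0<..}"
    then have "y > 0" by simp
    have "y powr ((p-1) + 1) = y powr (p-1) * y powr 1" by (rule powr_add)
    then show "y powr p = \<bar>y\<bar> powr (p - 1) * y" using \<open>y > 0\<close> by simp
  qed (use True in auto)
next
  case False
  show ?thesis
  proof (cases "x < 0")
    case True
    have d0: "((\<lambda>z. z powr p) has_real_derivative p * (-x) powr (p - 1)) (at (-x))"
      by (rule has_real_derivative_powr) (use True in simp)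
    have d: "((\<lambda>z. - ((- z) powr p)) has_real_derivative p * (-x) powr (p - 1)) (at x)"
    proof -
      have d1: "((\<lambda>z. (- z) powr p) has_real_derivative (p * (-x) powr (p-1)) * (-1)) (at x)"
        using DERIV_chain2[where f="\<lambda>z. z powr p" and g="uminus", OF d0 DERIV_minus[OF DERIV_ident]] by simp
      show ?thesis using DERIV_minus[OF d1] by simp
    qed
    show ?thesis
    proof (rule has_field_derivative_transform_within_open[where S="{..<0}"])
      show "((\<lambda>z. - ((- z) powr p)) has_real_derivative p * \<bar>x\<bar> powr (p - 1)) (at x)" using d True by simp
      fix y :: real assume "y \<in> {..<0}"
      then have "y < 0" by simp
      then show "- ((- y) powr p) = \<bar>y\<bar> powr (p - 1) * y"
        using powr_mult_base[of "-y" "p-1"] by (simp add: powr_add[symmetric] algebra_simps)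
    qed (use True in auto)
  next
    case False
    with \<open>\<not> x > 0\<close> have x0: "x = 0" by simp
    have "((\<lambda>y. \<bar>y\<bar> powr (p-1)) \<longlongrightarrow> 0) (at 0)"
      by (rule tendsto_zero_powrI) (auto intro!: tendsto_eq_intros simp: p)
    then have "((\<lambda>y. (\<bar>y\<bar> powr (p-1) * y - \<bar>0\<bar> powr (p-1) * 0) / (y - 0)) \<longlongrightarrow> 0) (at 0)"
      by (rule Lim_transform_eventually) (auto simp: eventually_at_filter)
    then show ?thesis using x0 p
      by (simp add: has_field_derivative_iff)
  qed
qed

lemma k_deriv:
  assumes p: "1 < (p::real)"
  shows "((\<lambda>y. \<bar>y\<bar> powr (p+1)) has_real_derivative ((p+1) * (\<bar>x\<bar> powr (p-1) * x))) (at x)"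
proof -
  have e: "\<And>y. \<bar>y\<bar> powr (p+1) = (\<bar>y\<bar> powr (p-1) * y) * y"
  proof -
    fix y :: real
    show "\<bar>y\<bar> powr (p+1) = (\<bar>y\<bar> powr (p-1) * y) * y"
    proof (cases "y = 0")
      case False
      have "\<bar>y\<bar> powr ((p-1)+2) = \<bar>y\<bar> powr (p-1) * \<bar>y\<bar> powr 2"
        by (rule powr_add)
      then have "\<bar>y\<bar> powr (p+1) = \<bar>y\<bar> powr (p-1) * \<bar>y\<bar> powr 2"
        by (simp add: add.commute)
      also have "\<dots> = \<bar>y\<bar> powr (p-1) * (y * y)" using False
        by (simp add: powr_numeral power2_eq_square)
      finally show ?thesis by simp
    qed simp
  qed
  have "((\<lambda>y. (\<bar>y\<bar> powr (p-1) * y) * y) has_real_derivative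
          ((p+1) * (\<bar>x\<bar> powr (p-1) * x))) (at x)"
    using DERIV_mult[OF g_deriv[OF p, of x] DERIV_ident] by (simp add: algebra_simps)
  then show ?thesis unfolding e .
qed

lemma deriv_eps:
  fixes f :: "real \<Rightarrow> real"
  assumes "(f has_real_derivative D) (at x)" "0 < e"
  shows "\<exists>d>0. \<forall>y. \<bar>y - x\<bar> < d \<longrightarrow> \<bar>f y - f x - D * (y - x)\<bar> \<le> e * \<bar>y - x\<bar>"
proof -
  from assms(1) have "((\<lambda>y. (f y - f x) / (y - x)) \<longlongrightarrow> D) (at x)"
    by (simp add: has_field_derivative_iff)
  from LIM_D[OF this assms(2)] obtain s where s: "s > 0"
    "\<And>y. y \<noteq> x \<and> norm (y - x) < s \<Longrightarrow> norm ((f y - f x) / (y - x) - D) < e" by blast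
  show ?thesis
  proof (intro exI[of _ s] conjI allI impI)
    fix y assume y: "\<bar>y - x\<bar> < s"
    show "\<bar>f y - f x - D * (y - x)\<bar> \<le> e * \<bar>y - x\<bar>"
    proof (cases "y = x")
      case False
      then have "\<bar>(f y - f x) / (y - x) - D\<bar> < e" using s(2)[of y] y by simp
      moreover have "f y - f x - D * (y - x) = ((f y - f x) / (y - x) - D) * (y - x)"
        using False by (simp add: field_simps)
      ultimately show ?thesis by (simp add: abs_mult mult_right_mono)
    qed simp
  qed (use s in auto)
qed

lemma finite_delta:
  assumes "\<And>j. j < (M::nat) \<Longrightarrow> \<exists>d>0. \<forall>t::real. \<bar>t\<bar> < d \<longrightarrow> P j t"
  shows "\<exists>d>0. \<forall>j<M. \<forall>t. \<bar>t\<bar> < d \<longrightarrow> P j t"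
  using assms
proof (induction M)
  case 0
  then show ?case by (auto intro: exI[of _ 1])
next
  case (Suc M)
  then obtain d1 where d1: "d1 > 0" "\<forall>j<M. \<forall>t. \<bar>t\<bar> < d1 \<longrightarrow> P j t" by (meson less_SucI)
  obtain d2 where d2: "d2 > 0" "\<forall>t. \<bar>t\<bar> < d2 \<longrightarrow> P M t" using Suc.prems by blast
  show ?case
    by (rule exI[of _ "min d1 d2"]) (use d1 d2 in \<open>auto simp: less_Suc_eq\<close>)
qed


lemma abs_g: "1 < (p::real) \<Longrightarrow> \<bar>\<bar>x\<bar> powr (p-1) * x\<bar> = \<bar>x\<bar> powr p"
proof (cases "x = 0")
  case False
  assume "1 < p"
  have "\<bar>x\<bar> powr ((p-1) + 1) = \<bar>x\<bar> powr (p-1) * \<bar>x\<bar> powr 1" by (rule powr_add)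
  then show ?thesis using False by (simp add: abs_mult)
qed simp

lemma k_lip:
  assumes p: "1 < (p::real)" and a: "\<bar>a\<bar> \<le> R" and b: "\<bar>b\<bar> \<le> R"
  shows "\<bar>\<bar>a\<bar> powr (p+1) - \<bar>b\<bar> powr (p+1)\<bar> \<le> (p+1) * R powr p * \<bar>a - b\<bar>"
proof -
  have main: "\<bar>\<bar>y\<bar> powr (p+1) - \<bar>x\<bar> powr (p+1)\<bar> \<le> (p+1) * R powr p * \<bar>y - x\<bar>"
    if xy: "x < y" "\<bar>x\<bar> \<le> R" "\<bar>y\<bar> \<le> R" for x y :: real
  proof -
    obtain z where z: "x < z" "z < y"
      "\<bar>y\<bar> powr (p+1) - \<bar>x\<bar> powr (p+1) = (y - x) * ((p+1) * (\<bar>z\<bar> powr (p-1) * z))"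
      using MVT2[OF xy(1), of "\<lambda>y. \<bar>y\<bar> powr (p+1)" "\<lambda>z. (p+1) * (\<bar>z\<bar> powr (p-1) * z)"]
        k_deriv[OF p] by blast
    have zR: "\<bar>z\<bar> \<le> R" using z xy by auto
    have "\<bar>(p+1) * (\<bar>z\<bar> powr (p-1) * z)\<bar> = (p+1) * \<bar>z\<bar> powr p"
      using abs_g[OF p, of z] p by (simp add: abs_mult)
    also have "\<dots> \<le> (p+1) * R powr p"
      using zR p by (intro mult_left_mono powr_mono2) auto
    finally have "\<bar>(p+1) * (\<bar>z\<bar> powr (p-1) * z)\<bar> \<le> (p+1) * R powr p" .
    then show ?thesis unfolding z(3) abs_mult using xy
      by (simp add: mult.commute mult_left_mono)
  qed
  show ?thesis
  proof (cases a b rule: linorder_cases)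
    case less then show ?thesis using main[of a b] a b by (simp add: abs_minus_commute)
  next
    case greater then show ?thesis using main[of b a] a b by simp
  qed simp
qed


lemma g_times: "\<bar>x::real\<bar> powr (p+1) = (\<bar>x\<bar> powr (p-1) * x) * x"
proof (cases "x = 0")
  case False
  have "\<bar>x\<bar> powr ((p-1)+2) = \<bar>x\<bar> powr (p-1) * \<bar>x\<bar> powr 2"
    by (rule powr_add)
  then have "\<bar>x\<bar> powr (p+1) = \<bar>x\<bar> powr (p-1) * \<bar>x\<bar> powr 2"
    by (simp add: add.commute)
  also have "\<dots> = \<bar>x\<bar> powr (p-1) * (x * x)" using False
    by (simp add: powr_numeral power2_eq_square)
  finally show ?thesis by simp
qed simp


lemma powr_near_one:
  fixes Q q \<delta> :: real
  assumes q: "1 \<le> q" and d: "\<delta> \<le> 1/2" and Qd: "\<bar>Q - 1\<bar> \<le> \<delta>"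
  shows "1 - \<delta> \<le> Q powr (1/q)" "Q powr (1/q) \<le> 1 + \<delta>"
proof -
  have Q0: "0 < Q" using d Qd by linarith
  have "1 - \<delta> \<le> Q powr (1/q) \<and> Q powr (1/q) \<le> 1 + \<delta>"
  proof (cases "Q \<le> 1")
    case True
    have "Q powr 1 \<le> Q powr (1/q)" using q Q0 True by (intro powr_mono') auto
    moreover have "Q powr (1/q) \<le> 1" using q Q0 True by (intro powr_le1) auto
    ultimately show ?thesis using Q0 Qd by auto
  next
    case False
    have "Q powr (1/q) \<le> Q powr 1" using q False by (intro powr_mono) auto
    moreover have "1 \<le> Q powr (1/q)" using q False by (intro ge_one_powr_ge_zero) auto
    ultimately show ?thesis using Q0 Qd by auto
  qed
  then show "1 - \<delta> \<le> Q powr (1/q)" "Q powr (1/q) \<le> 1 + \<delta>" by auto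
qed




locale gsl =
  fixes M :: nat and h :: real and K :: "nat \<Rightarrow> nat \<Rightarrow> real" and Vw :: "nat \<Rightarrow> real"
    and p lam \<alpha> :: real and us :: "nat \<Rightarrow> real"
  assumes M_pos: "0 < M" and h_pos: "0 < h"
    and K_sym: "\<And>j l. j < M \<Longrightarrow> l < M \<Longrightarrow> K j l = K l j"
    and K_psd: "\<And>u. 0 \<le> (\<Sum>j<M. u j * (\<Sum>l<M. K j l * u l))"
    and p_gt: "1 < p" and lam_nn: "0 \<le> lam"
    and alpha_ge: "\<And>j. j < M \<Longrightarrow> 1 \<le> 2 * \<alpha> - Vw j" and alpha_half: "1/2 \<le> \<alpha>"
    and us_S: "h * (\<Sum>j<M. \<bar>us j\<bar> powr (p+1)) = 1"
    and EL: "\<And>j. j < M \<Longrightarrow> (\<Sum>l<M. K j l * us l) + Vw j * us j = lam * (\<bar>us j\<bar> powr (p-1) * us j)"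
    and ND: "\<exists>c>0. \<forall>\<xi>. (\<Sum>j<M. (\<bar>us j\<bar> powr (p-1) * us j) * \<xi> j) = 0 \<longrightarrow>
               c * (\<Sum>j<M. \<xi> j * \<xi> j) \<le> (\<Sum>j<M. ((\<Sum>l<M. K j l * \<xi> l) + Vw j * \<xi> j - p * lam * \<bar>us j\<bar> powr (p-1) * \<xi> j) * \<xi> j)"
begin

definition ip :: "(nat \<Rightarrow> real) \<Rightarrow> (nat \<Rightarrow> real) \<Rightarrow> real" where
  "ip u v = (\<Sum>j<M. u j * v j)"
definition nrm :: "(nat \<Rightarrow> real) \<Rightarrow> real" where
  "nrm u = L2_set u {..<M}"
definition Kv :: "(nat \<Rightarrow> real) \<Rightarrow> nat \<Rightarrow> real" where
  "Kv u = (\<lambda>j. \<Sum>l<M. K j l * u l)"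
definition w :: "nat \<Rightarrow> real" where
  "w = (\<lambda>j. \<bar>us j\<bar> powr (p-1) * us j)"
definition Hv :: "(nat \<Rightarrow> real) \<Rightarrow> nat \<Rightarrow> real" where
  "Hv u = (\<lambda>j. Kv u j + Vw j * u j - p * lam * \<bar>us j\<bar> powr (p-1) * u j)"
definition Av :: "(nat \<Rightarrow> real) \<Rightarrow> nat \<Rightarrow> real" where
  "Av u = (\<lambda>j. Kv u j + Vw j * u j)"
definition qn :: "(nat \<Rightarrow> real) \<Rightarrow> real" where
  "qn u = h * (\<Sum>j<M. \<bar>u j\<bar> powr (p+1))"

lemma ip_comm: "ip u v = ip v u"
  by (simp add: ip_def mult.commute)
lemma ip_diff_left: "ip (\<lambda>j. u j - v j) x = ip u x - ip v x"
  by (simp add: ip_def algebra_simps sum_subtractf)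
lemma ip_add_left: "ip (\<lambda>j. u j + v j) x = ip u x + ip v x"
  by (simp add: ip_def algebra_simps sum.distrib)
lemma ip_scale_left: "ip (\<lambda>j. c * u j) x = c * ip u x"
  by (simp add: ip_def algebra_simps sum_distrib_left)
lemma ip_diff_right: "ip x (\<lambda>j. u j - v j) = ip x u - ip x v"
  by (simp add: ip_def algebra_simps sum_subtractf)
lemma ip_add_right: "ip x (\<lambda>j. u j + v j) = ip x u + ip x v"
  by (simp add: ip_def algebra_simps sum.distrib)
lemma ip_scale_right: "ip x (\<lambda>j. c * u j) = c * ip x u"
  by (simp add: ip_def algebra_simps sum_distrib_left)
lemma ip_cong: "(\<And>j. j < M \<Longrightarrow> u j = u' j) \<Longrightarrow> (\<And>j. j < M \<Longrightarrow> v j = v' j) \<Longrightarrow> ip u v = ip u' v'"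
  by (simp add: ip_def)

lemma ip_self: "ip u u = (nrm u)\<^sup>2"
  by (simp add: ip_def nrm_def L2_set_def sum_nonneg power2_eq_square)
lemma nrm_nonneg: "0 \<le> nrm u" by (simp add: nrm_def)
lemma ip_self_nonneg: "0 \<le> ip u u" by (simp add: ip_self)

lemma CS: "\<bar>ip u v\<bar> \<le> nrm u * nrm v"
proof -
  have "\<bar>ip u v\<bar> \<le> (\<Sum>j<M. \<bar>u j\<bar> * \<bar>v j\<bar>)" unfolding ip_def
    by (rule order_trans[OF sum_abs]) (simp add: abs_mult)
  also have "\<dots> \<le> nrm u * nrm v" unfolding nrm_def by (rule L2_set_mult_ineq)
  finally show ?thesis .
qed

lemma comp_le: "j < M \<Longrightarrow> \<bar>u j\<bar> \<le> nrm u"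
proof -
  assume "j < M"
  then have "\<bar>u j\<bar> \<le> L2_set (\<lambda>j. \<bar>u j\<bar>) {..<M}" by (intro member_le_L2_set) auto
  then show ?thesis by (simp add: nrm_def L2_set_def)
qed

lemma sum_abs_le: "(\<Sum>j<M. \<bar>u j\<bar>) \<le> real M * nrm u"
proof -
  have "(\<Sum>j<M. \<bar>u j\<bar>) \<le> (\<Sum>j<M. nrm u)" by (intro sum_mono comp_le) auto
  then show ?thesis by simp
qed

lemma nrm_add: "nrm (\<lambda>j. u j + v j) \<le> nrm u + nrm v"
  unfolding nrm_def by (rule L2_set_triangle_ineq)
lemma nrm_scale: "nrm (\<lambda>j. c * u j) = \<bar>c\<bar> * nrm u"
  unfolding nrm_def by (simp add: L2_set_right_distrib[symmetric] L2_set_def power_mult_distrib)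
    (simp add: L2_set_def power_mult_distrib real_sqrt_mult flip: sum_distrib_left)
lemma nrm_uminus: "nrm (\<lambda>j. - u j) = nrm u"
  using nrm_scale[of "-1" u] by simp
lemma nrm_diff: "nrm (\<lambda>j. u j - v j) \<le> nrm u + nrm v"
  using nrm_add[of u "\<lambda>j. - v j"] nrm_uminus[of v] by simp
lemma nrm_cong: "(\<And>j. j < M \<Longrightarrow> u j = u' j) \<Longrightarrow> nrm u = nrm u'"
  unfolding nrm_def by (rule L2_set_cong) auto
lemma nrm_le_ip: "nrm u * nrm u = ip u u"
  by (simp add: ip_self power2_eq_square)

lemma diag_bound:
  assumes "\<And>j. j < M \<Longrightarrow> \<bar>dg j\<bar> \<le> B"
  shows "nrm (\<lambda>j. dg j * u j) \<le> B * nrm u"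
proof -
  have B: "0 \<le> B" using assms[of 0] M_pos by auto
  have "nrm (\<lambda>j. dg j * u j) = L2_set (\<lambda>j. \<bar>dg j * u j\<bar>) {..<M}" by (simp add: nrm_def L2_set_def)
  also have "\<dots> \<le> L2_set (\<lambda>j. B * \<bar>u j\<bar>) {..<M}"
    using assms by (intro L2_set_mono) (auto simp: abs_mult intro: mult_right_mono)
  also have "\<dots> = B * nrm u" using B
    by (simp add: nrm_def L2_set_def power_mult_distrib real_sqrt_mult flip: sum_distrib_left)
  finally show ?thesis .
qed

lemma Kv_diff: "Kv (\<lambda>j. u j - v j) = (\<lambda>j. Kv u j - Kv v j)"
  by (simp add: Kv_def algebra_simps sum_subtractf)
lemma Kv_add: "Kv (\<lambda>j. u j + v j) = (\<lambda>j. Kv u j + Kv v j)"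
  by (simp add: Kv_def algebra_simps sum.distrib)
lemma Kv_scale: "Kv (\<lambda>j. c * u j) = (\<lambda>j. c * Kv u j)"
  by (simp add: Kv_def algebra_simps sum_distrib_left)
lemma Kv_cong: "(\<And>j. j < M \<Longrightarrow> u j = u' j) \<Longrightarrow> Kv u = Kv u'"
  by (simp add: Kv_def)

lemma Kv_sym: "ip (Kv u) v = ip u (Kv v)"
proof -
  have "ip (Kv u) v = (\<Sum>j<M. \<Sum>l<M. K j l * u l * v j)"
    by (simp add: ip_def Kv_def sum_distrib_right)
  also have "\<dots> = (\<Sum>l<M. \<Sum>j<M. K j l * u l * v j)" by (rule sum.swap)
  also have "\<dots> = (\<Sum>l<M. \<Sum>j<M. u l * (K l j * v j))"
    by (intro sum.cong refl) (simp add: K_sym)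
  also have "\<dots> = ip u (Kv v)" by (simp add: ip_def Kv_def sum_distrib_left)
  finally show ?thesis .
qed

lemma Kv_psd: "0 \<le> ip (Kv u) u"
  using K_psd[of u] by (simp add: ip_def Kv_def mult.commute)

definition sK :: real where "sK = sqrt (\<Sum>j<M. \<Sum>l<M. (K j l)\<^sup>2)"

lemma Kv_bound: "nrm (Kv u) \<le> sK * nrm u"
proof -
  have "\<And>j. (Kv u j)\<^sup>2 \<le> (\<Sum>l<M. (K j l)\<^sup>2) * (\<Sum>l<M. (u l)\<^sup>2)"
    unfolding Kv_def by (rule Cauchy_Schwarz_ineq_sum)
  then have "(\<Sum>j<M. (Kv u j)\<^sup>2) \<le> (\<Sum>j<M. (\<Sum>l<M. (K j l)\<^sup>2) * (\<Sum>l<M. (u l)\<^sup>2))"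
    by (rule sum_mono)
  also have "\<dots> = (\<Sum>j<M. \<Sum>l<M. (K j l)\<^sup>2) * (\<Sum>l<M. (u l)\<^sup>2)" by (simp add: sum_distrib_right)
  finally have "sqrt (\<Sum>j<M. (Kv u j)\<^sup>2) \<le> sqrt ((\<Sum>j<M. \<Sum>l<M. (K j l)\<^sup>2) * (\<Sum>l<M. (u l)\<^sup>2))"
    by (rule real_sqrt_le_mono)
  then show ?thesis by (simp add: nrm_def L2_set_def sK_def real_sqrt_mult)
qed

lemma sK_nonneg: "0 \<le> sK" by (simp add: sK_def sum_nonneg)


definition Dg :: "nat \<Rightarrow> real" where
  "Dg j = Vw j - p * lam * \<bar>us j\<bar> powr (p-1)"
lemma Hv_alt: "Hv u = (\<lambda>j. Kv u j + Dg j * u j)"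
  by (simp add: Hv_def Dg_def algebra_simps)
lemma Hv_diff: "Hv (\<lambda>j. u j - v j) = (\<lambda>j. Hv u j - Hv v j)"
  by (simp add: Hv_alt Kv_diff algebra_simps)
lemma Hv_add: "Hv (\<lambda>j. u j + v j) = (\<lambda>j. Hv u j + Hv v j)"
  by (simp add: Hv_alt Kv_add algebra_simps)
lemma Hv_scale: "Hv (\<lambda>j. c * u j) = (\<lambda>j. c * Hv u j)"
  by (simp add: Hv_alt Kv_scale algebra_simps)
lemma Hv_sym: "ip (Hv u) v = ip u (Hv v)"
proof -
  have "ip (Hv u) v = ip (Kv u) v + ip (\<lambda>j. Dg j * u j) v"
    unfolding Hv_alt by (rule ip_add_left)
  also have "\<dots> = ip u (Kv v) + ip u (\<lambda>j. Dg j * v j)"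
    by (simp only: Kv_sym) (simp add: ip_def algebra_simps)
  also have "\<dots> = ip u (Hv v)" unfolding Hv_alt by (simp add: ip_add_right)
  finally show ?thesis .
qed

definition DgB :: real where "DgB = (\<Sum>j<M. \<bar>Dg j\<bar>)"
definition cH :: real where "cH = sK + DgB + 1"
lemma DgB_ge: "j < M \<Longrightarrow> \<bar>Dg j\<bar> \<le> DgB"
  unfolding DgB_def by (rule member_le_sum) auto
lemma cH_pos: "1 \<le> cH"
  using sK_nonneg DgB_ge[of 0] M_pos by (simp add: cH_def)
lemma Hv_bound: "nrm (Hv u) \<le> cH * nrm u"
proof -
  have "nrm (Hv u) \<le> nrm (Kv u) + nrm (\<lambda>j. Dg j * u j)" unfolding Hv_alt by (rule nrm_add)
  also have "\<dots> \<le> sK * nrm u + DgB * nrm u"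
    by (intro add_mono Kv_bound diag_bound DgB_ge)
  also have "\<dots> \<le> cH * nrm u" using nrm_nonneg[of u]
    by (simp add: cH_def algebra_simps)
  finally show ?thesis .
qed
lemma ip_Hv_le: "ip (Hv u) u \<le> cH * (nrm u)\<^sup>2"
proof -
  have "ip (Hv u) u \<le> nrm (Hv u) * nrm u" using CS[of "Hv u" u] by simp
  also have "\<dots> \<le> cH * nrm u * nrm u" using Hv_bound[of u] nrm_nonneg[of u]
    by (intro mult_right_mono) auto
  finally show ?thesis by (simp add: power2_eq_square)
qed

lemma Hus: "j < M \<Longrightarrow> Hv us j = (1 - p) * lam * w j"
  using EL[of j] by (simp add: Hv_def Kv_def w_def algebra_simps)
lemma ip_Hus: "ip (Hv us) x = (1 - p) * lam * ip w x"
proof -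
  have "ip (Hv us) x = ip (\<lambda>j. (1 - p) * lam * w j) x" by (rule ip_cong) (auto simp: Hus)
  then show ?thesis by (simp add: ip_scale_left)
qed
lemma ip_w_us: "ip w us = 1 / h"
proof -
  have "ip w us = (\<Sum>j<M. \<bar>us j\<bar> powr (p+1))" by (simp add: ip_def w_def g_times)
  then show ?thesis using us_S h_pos by (simp add: field_simps)
qed

lemma ND': "\<exists>cN>0. \<forall>\<xi>. ip w \<xi> = 0 \<longrightarrow> cN * ip \<xi> \<xi> \<le> ip (Hv \<xi>) \<xi>"
  using ND by (simp add: ip_def w_def Hv_def Kv_def)

lemma Phi_identity:
  fixes d \<xi> :: "nat \<Rightarrow> real"
  assumes xi: "ip w \<xi> = 0"
  defines "\<beta> \<equiv> h * ip w d"
  shows "ip (Hv (\<lambda>j. \<xi> j - (d j - \<beta> * us j))) (\<lambda>j. \<xi> j - (d j - \<beta> * us j))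
     = ip (Hv \<xi>) \<xi> - 2 * ip (Hv \<xi>) d + ip (Hv d) d + (p - 1) * lam * \<beta>\<^sup>2 / h"
proof -
  have a: "ip (Hv \<xi>) us = 0" using xi by (simp add: Hv_sym[of \<xi> us] ip_comm[of \<xi>] ip_Hus)
  have b: "ip (Hv d) us = (1 - p) * lam * \<beta> / h" using h_pos
    by (simp add: Hv_sym[of d us] ip_comm[of d] ip_Hus \<beta>_def)
  have c: "ip (Hv us) us = (1 - p) * lam / h" by (simp add: ip_Hus ip_w_us)
  have d: "ip (Hv us) d = (1 - p) * lam * \<beta> / h" using h_pos
    by (simp add: ip_Hus \<beta>_def)
  have e: "ip (Hv us) \<xi> = 0" by (simp add: ip_Hus xi)
  have sy: "ip (Hv d) \<xi> = ip (Hv \<xi>) d" by (simp only: Hv_sym[of d \<xi>] ip_comm[of d])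
  show ?thesis
    apply (simp only: Hv_diff Hv_scale ip_diff_left ip_diff_right ip_scale_left ip_scale_right)
    apply (simp only: a b c d e sy)
    apply (simp add: power2_eq_square algebra_simps add_divide_distrib diff_divide_distrib)
    done
qed

lemma margin:
  assumes tau: "0 < \<tau>"
  shows "(1 + 2 / \<tau>) * ip d d \<le>
    2 * ip (\<lambda>j. (1/\<tau> + \<alpha>) * d j + Kv d j) d - ip (Hv d) d - (p - 1) * lam * (h * ip w d)\<^sup>2 / h"
proof -
  define S where "S = (\<Sum>j<M. \<bar>us j\<bar> powr (p-1) * (d j)\<^sup>2)"
  have S0: "0 \<le> S" unfolding S_def by (intro sum_nonneg) auto
  have cs: "(ip w d)\<^sup>2 \<le> (\<Sum>j<M. (sqrt (\<bar>us j\<bar> powr (p-1)) * us j)\<^sup>2) * (\<Sum>j<M. (sqrt (\<bar>us j\<bar> powr (p-1)) * d j)\<^sup>2)"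
  proof -
    have "ip w d = (\<Sum>j<M. (sqrt (\<bar>us j\<bar> powr (p-1)) * us j) * (sqrt (\<bar>us j\<bar> powr (p-1)) * d j))"
      unfolding ip_def w_def
      by (intro sum.cong refl) (simp add: algebra_simps real_sqrt_mult[symmetric])
    then show ?thesis by (simp add: Cauchy_Schwarz_ineq_sum)
  qed
  have s1: "(\<Sum>j<M. (sqrt (\<bar>us j\<bar> powr (p-1)) * us j)\<^sup>2) = 1 / h"
  proof -
    have "(\<Sum>j<M. (sqrt (\<bar>us j\<bar> powr (p-1)) * us j)\<^sup>2) = (\<Sum>j<M. \<bar>us j\<bar> powr (p+1))"
      by (intro sum.cong refl) (simp add: power_mult_distrib g_times power2_eq_square)
    then show ?thesis using us_S h_pos by (simp add: field_simps)
  qed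
  have s2: "(\<Sum>j<M. (sqrt (\<bar>us j\<bar> powr (p-1)) * d j)\<^sup>2) = S"
    unfolding S_def by (intro sum.cong refl) (simp add: power_mult_distrib)
  have wd: "h * (ip w d)\<^sup>2 \<le> S"
  proof -
    have "h * (ip w d)\<^sup>2 \<le> h * ((1/h) * S)" using cs s1 s2 h_pos by (intro mult_left_mono) auto
    also have "\<dots> = S" using h_pos by simp
    finally show ?thesis .
  qed
  have eq: "2 * ip (\<lambda>j. (1/\<tau> + \<alpha>) * d j + Kv d j) d - ip (Hv d) d
      = (\<Sum>j<M. (2 * (1/\<tau> + \<alpha>) - Vw j) * (d j)\<^sup>2) + ip (Kv d) d + p * lam * S"
    by (simp add: ip_def Hv_def S_def sum_distrib_left algebra_simps sum.distrib sum_subtractf power2_eq_square)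
  have l1: "(1 + 2/\<tau>) * ip d d \<le> (\<Sum>j<M. (2 * (1/\<tau> + \<alpha>) - Vw j) * (d j)\<^sup>2)"
    unfolding ip_def sum_distrib_left
    by (intro sum_mono) (use alpha_ge in \<open>auto simp: power2_eq_square intro!: mult_right_mono\<close>)
  have l2: "(p - 1) * lam * (h * ip w d)\<^sup>2 / h \<le> (p - 1) * lam * S"
  proof -
    have "(p - 1) * lam * (h * ip w d)\<^sup>2 / h = (p - 1) * lam * (h * (ip w d)\<^sup>2)"
      using h_pos by (simp add: power2_eq_square field_simps)
    also have "\<dots> \<le> (p - 1) * lam * S" using wd p_gt lam_nn by (intro mult_left_mono) auto
    finally show ?thesis .
  qed
  have "(p - 1) * lam * S \<le> p * lam * S" using lam_nn S0 by (simp add: mult_right_mono mult_left_mono algebra_simps)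
  then show ?thesis using eq l1 l2 Kv_psd[of d] by linarith
qed


lemma qn_us: "qn us = 1" using us_S by (simp add: qn_def)

lemma beta_small:
  assumes eps: "0 < \<epsilon>"
  shows "\<exists>\<rho>>0. \<forall>u. qn u = 1 \<and> nrm (\<lambda>j. u j - us j) < \<rho> \<longrightarrow>
            \<bar>h * ip w (\<lambda>j. u j - us j)\<bar> \<le> \<epsilon> * nrm (\<lambda>j. u j - us j)"
proof -
  define \<epsilon>' where "\<epsilon>' = \<epsilon> / (h * real M)"
  have \<epsilon>'pos: "0 < \<epsilon>'" using eps h_pos M_pos by (simp add: \<epsilon>'_def)
  have H: "\<And>j. j < M \<Longrightarrow> \<exists>d>0. \<forall>t. \<bar>t\<bar> < d \<longrightarrow>
     \<bar>\<bar>us j + t\<bar> powr (p+1) - \<bar>us j\<bar> powr (p+1) - (p+1) * (\<bar>us j\<bar> powr (p-1) * us j) * t\<bar> \<le> \<epsilon>' * \<bar>t\<bar>"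
  proof -
    fix j
    obtain d where d: "d > 0" "\<forall>y. \<bar>y - us j\<bar> < d \<longrightarrow>
      \<bar>\<bar>y\<bar> powr (p+1) - \<bar>us j\<bar> powr (p+1) - (p+1) * (\<bar>us j\<bar> powr (p-1) * us j) * (y - us j)\<bar> \<le> \<epsilon>' * \<bar>y - us j\<bar>"
      using deriv_eps[OF k_deriv[OF p_gt, of "us j"] \<epsilon>'pos] by blast
    show "\<exists>d>0. \<forall>t. \<bar>t\<bar> < d \<longrightarrow>
     \<bar>\<bar>us j + t\<bar> powr (p+1) - \<bar>us j\<bar> powr (p+1) - (p+1) * (\<bar>us j\<bar> powr (p-1) * us j) * t\<bar> \<le> \<epsilon>' * \<bar>t\<bar>"
    proof (intro exI[of _ d] conjI allI impI)
      fix t :: real assume "\<bar>t\<bar> < d"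
      then have "\<bar>us j + t - us j\<bar> < d" by simp
      from d(2)[rule_format, OF this]
      show "\<bar>\<bar>us j + t\<bar> powr (p+1) - \<bar>us j\<bar> powr (p+1) - (p+1) * (\<bar>us j\<bar> powr (p-1) * us j) * t\<bar> \<le> \<epsilon>' * \<bar>t\<bar>"
        by (simp only: add_diff_cancel_left')
    qed (rule d(1))
  qed
  have "\<exists>\<rho>>0. \<forall>j<M. \<forall>t. \<bar>t\<bar> < \<rho> \<longrightarrow> \<bar>\<bar>us j + t\<bar> powr (p+1) - \<bar>us j\<bar> powr (p+1) - (p+1) * (\<bar>us j\<bar> powr (p-1) * us j) * t\<bar> \<le> \<epsilon>' * \<bar>t\<bar>"
    by (rule finite_delta[where M=M and P="\<lambda>j t. \<bar>\<bar>us j + t\<bar> powr (p+1) - \<bar>us j\<bar> powr (p+1) - (p+1) * (\<bar>us j\<bar> powr (p-1) * us j) * t\<bar> \<le> \<epsilon>' * \<bar>t\<bar>"]) (rule H)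
  then obtain \<rho> where \<rho>: "\<rho> > 0" "\<forall>j<M. \<forall>t. \<bar>t\<bar> < \<rho> \<longrightarrow>
     \<bar>\<bar>us j + t\<bar> powr (p+1) - \<bar>us j\<bar> powr (p+1) - (p+1) * (\<bar>us j\<bar> powr (p-1) * us j) * t\<bar> \<le> \<epsilon>' * \<bar>t\<bar>"
    by (elim exE conjE) (rule that)
  show ?thesis
  proof (intro exI[of _ \<rho>] conjI allI impI)
    fix u assume u: "qn u = 1 \<and> nrm (\<lambda>j. u j - us j) < \<rho>"
    define e where "e = (\<lambda>j. u j - us j)"
    define R where "R = (\<lambda>j. \<bar>u j\<bar> powr (p+1) - \<bar>us j\<bar> powr (p+1) - (p+1) * w j * e j)"
    have Rb: "\<bar>R j\<bar> \<le> \<epsilon>' * \<bar>e j\<bar>" if j: "j < M" for j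
    proof -
      have "\<bar>e j\<bar> < \<rho>" using comp_le[OF j, of e] u by (simp add: e_def)
      from \<rho>(2)[rule_format, OF j this] show ?thesis by (simp add: R_def e_def w_def)
    qed
    have sR: "(\<Sum>j<M. R j) = (\<Sum>j<M. \<bar>u j\<bar> powr (p+1)) - (\<Sum>j<M. \<bar>us j\<bar> powr (p+1)) - (p+1) * ip w e"
      unfolding R_def ip_def by (simp only: sum_subtractf sum_distrib_left mult.assoc)
    have "0 = qn u - qn us" using u qn_us by simp
    also have "\<dots> = h * ((\<Sum>j<M. \<bar>u j\<bar> powr (p+1)) - (\<Sum>j<M. \<bar>us j\<bar> powr (p+1)))"
      by (simp only: qn_def right_diff_distrib)
    also have "\<dots> = h * (\<Sum>j<M. R j) + h * (p+1) * ip w e" unfolding sR by (simp only: ring_distribs mult.assoc)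
    finally have eq: "h * (p+1) * ip w e = - h * (\<Sum>j<M. R j)" by linarith
    have "\<bar>h * (p+1) * ip w e\<bar> \<le> h * (\<Sum>j<M. \<bar>R j\<bar>)" unfolding eq using h_pos
      by (simp add: abs_mult sum_abs)
    also have "\<dots> \<le> h * (\<Sum>j<M. \<epsilon>' * \<bar>e j\<bar>)" using h_pos Rb
      by (intro mult_left_mono sum_mono) auto
    also have "\<dots> = h * \<epsilon>' * (\<Sum>j<M. \<bar>e j\<bar>)" by (simp add: sum_distrib_left mult.assoc)
    also have "\<dots> \<le> h * \<epsilon>' * (real M * nrm e)" using h_pos \<epsilon>'pos
      by (intro mult_left_mono sum_abs_le) auto
    also have "\<dots> = \<epsilon> * nrm e" using h_pos M_pos by (simp add: \<epsilon>'_def)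
    finally have "\<bar>h * (p+1) * ip w e\<bar> \<le> \<epsilon> * nrm e" .
    moreover have "\<bar>h * ip w e\<bar> \<le> \<bar>h * (p+1) * ip w e\<bar>" using p_gt h_pos
      by (simp add: abs_mult mult_right_mono)
    ultimately show "\<bar>h * ip w (\<lambda>j. u j - us j)\<bar> \<le> \<epsilon> * nrm (\<lambda>j. u j - us j)"
      by (simp add: e_def)
  qed (use \<rho> in auto)
qed

lemma g_rem:
  assumes eps: "0 < \<epsilon>"
  shows "\<exists>\<rho>>0. \<forall>e. nrm e < \<rho> \<longrightarrow>
     nrm (\<lambda>j. \<bar>us j + e j\<bar> powr (p-1) * (us j + e j) - w j - p * \<bar>us j\<bar> powr (p-1) * e j) \<le> \<epsilon> * nrm e"
proof -
  have H: "\<And>j. j < M \<Longrightarrow> \<exists>d>0. \<forall>t. \<bar>t\<bar> < d \<longrightarrow>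
     \<bar>\<bar>us j + t\<bar> powr (p-1) * (us j + t) - w j - p * \<bar>us j\<bar> powr (p-1) * t\<bar> \<le> \<epsilon> * \<bar>t\<bar>"
  proof -
    fix j
    obtain d where d: "d > 0" "\<forall>y. \<bar>y - us j\<bar> < d \<longrightarrow>
      \<bar>\<bar>y\<bar> powr (p-1) * y - \<bar>us j\<bar> powr (p-1) * us j - p * \<bar>us j\<bar> powr (p-1) * (y - us j)\<bar> \<le> \<epsilon> * \<bar>y - us j\<bar>"
      using deriv_eps[OF g_deriv[OF p_gt, of "us j"] eps] by blast
    show "\<exists>d>0. \<forall>t. \<bar>t\<bar> < d \<longrightarrow>
     \<bar>\<bar>us j + t\<bar> powr (p-1) * (us j + t) - w j - p * \<bar>us j\<bar> powr (p-1) * t\<bar> \<le> \<epsilon> * \<bar>t\<bar>"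
    proof (intro exI[of _ d] conjI allI impI)
      fix t :: real assume "\<bar>t\<bar> < d"
      then have "\<bar>us j + t - us j\<bar> < d" by simp
      from d(2)[rule_format, OF this]
      show "\<bar>\<bar>us j + t\<bar> powr (p-1) * (us j + t) - w j - p * \<bar>us j\<bar> powr (p-1) * t\<bar> \<le> \<epsilon> * \<bar>t\<bar>"
        by (simp only: add_diff_cancel_left' w_def)
    qed (rule d(1))
  qed
  have "\<exists>\<rho>>0. \<forall>j<M. \<forall>t. \<bar>t\<bar> < \<rho> \<longrightarrow> \<bar>\<bar>us j + t\<bar> powr (p-1) * (us j + t) - w j - p * \<bar>us j\<bar> powr (p-1) * t\<bar> \<le> \<epsilon> * \<bar>t\<bar>"
    by (rule finite_delta[where M=M and P="\<lambda>j t. \<bar>\<bar>us j + t\<bar> powr (p-1) * (us j + t) - w j - p * \<bar>us j\<bar> powr (p-1) * t\<bar> \<le> \<epsilon> * \<bar>t\<bar>"]) (rule H)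
  then obtain \<rho> where \<rho>: "\<rho> > 0" "\<forall>j<M. \<forall>t. \<bar>t\<bar> < \<rho> \<longrightarrow>
     \<bar>\<bar>us j + t\<bar> powr (p-1) * (us j + t) - w j - p * \<bar>us j\<bar> powr (p-1) * t\<bar> \<le> \<epsilon> * \<bar>t\<bar>"
    by (elim exE conjE) (rule that)
  show ?thesis
  proof (intro exI[of _ \<rho>] conjI allI impI)
    fix e assume e: "nrm e < \<rho>"
    have "nrm (\<lambda>j. \<bar>us j + e j\<bar> powr (p-1) * (us j + e j) - w j - p * \<bar>us j\<bar> powr (p-1) * e j)
       = L2_set (\<lambda>j. \<bar>\<bar>us j + e j\<bar> powr (p-1) * (us j + e j) - w j - p * \<bar>us j\<bar> powr (p-1) * e j\<bar>) {..<M}"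
      by (simp add: nrm_def L2_set_def)
    also have "\<dots> \<le> L2_set (\<lambda>j. \<epsilon> * \<bar>e j\<bar>) {..<M}"
    proof (rule L2_set_mono)
      fix j assume j: "j \<in> {..<M}"
      have "\<bar>e j\<bar> < \<rho>" using comp_le[of j e] j e by simp
      then show "\<bar>\<bar>us j + e j\<bar> powr (p-1) * (us j + e j) - w j - p * \<bar>us j\<bar> powr (p-1) * e j\<bar> \<le> \<epsilon> * \<bar>e j\<bar>"
        using \<rho>(2) j by auto
    qed simp
    also have "\<dots> = \<epsilon> * nrm e" using eps
      by (simp add: nrm_def L2_set_def power_mult_distrib real_sqrt_mult flip: sum_distrib_left)
    finally show "nrm (\<lambda>j. \<bar>us j + e j\<bar> powr (p-1) * (us j + e j) - w j - p * \<bar>us j\<bar> powr (p-1) * e j) \<le> \<epsilon> * nrm e" .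
  qed (use \<rho> in auto)
qed


lemma Av_add: "Av (\<lambda>j. u j + v j) = (\<lambda>j. Av u j + Av v j)"
  by (simp add: Av_def Kv_add algebra_simps)
lemma Av_cong: "(\<And>j. j < M \<Longrightarrow> u j = u' j) \<Longrightarrow> j < M \<Longrightarrow> Av u j = Av u' j"
  by (simp add: Av_def Kv_def)
lemma Hv_cong: "(\<And>j. j < M \<Longrightarrow> u j = u' j) \<Longrightarrow> j < M \<Longrightarrow> Hv u j = Hv u' j"
  by (simp add: Hv_def Kv_def)
lemma Av_sym: "ip (Av u) v = ip u (Av v)"
proof -
  have "ip (Av u) v = ip (Kv u) v + ip (\<lambda>j. Vw j * u j) v"
    unfolding Av_def by (rule ip_add_left)
  also have "\<dots> = ip u (Kv v) + ip u (\<lambda>j. Vw j * v j)"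
    by (simp only: Kv_sym) (simp add: ip_def algebra_simps)
  also have "\<dots> = ip u (Av v)" unfolding Av_def by (simp add: ip_add_right)
  finally show ?thesis .
qed
definition cA :: real where "cA = sK + (\<Sum>j<M. \<bar>Vw j\<bar>) + 1"
lemma cA_pos: "1 \<le> cA"
proof -
  have "0 \<le> (\<Sum>j<M. \<bar>Vw j\<bar>)" by (simp add: sum_nonneg)
  then show ?thesis using sK_nonneg by (simp add: cA_def)
qed
lemma Av_bound: "nrm (Av u) \<le> cA * nrm u"
proof -
  have "nrm (Av u) \<le> nrm (Kv u) + nrm (\<lambda>j. Vw j * u j)" unfolding Av_def by (rule nrm_add)
  also have "\<dots> \<le> sK * nrm u + (\<Sum>j<M. \<bar>Vw j\<bar>) * nrm u"
    by (intro add_mono Kv_bound diag_bound member_le_sum) auto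
  also have "\<dots> \<le> cA * nrm u" using nrm_nonneg[of u]
    by (simp add: cA_def algebra_simps)
  finally show ?thesis .
qed
lemma Av_us: "j < M \<Longrightarrow> Av us j = lam * w j"
  using EL[of j] by (simp add: Av_def Kv_def w_def)
lemma ip_Av_us: "ip (Av us) x = lam * ip w x"
proof -
  have "ip (Av us) x = ip (\<lambda>j. lam * w j) x" by (rule ip_cong) (auto simp: Av_us)
  then show ?thesis by (simp add: ip_scale_left)
qed
lemma Hv_Av: "Hv u j = Av u j - p * lam * \<bar>us j\<bar> powr (p-1) * u j"
  by (simp add: Hv_def Av_def)

definition lt :: "(nat \<Rightarrow> real) \<Rightarrow> real" where "lt u = h * ip (Av u) u"
definition G :: "(nat \<Rightarrow> real) \<Rightarrow> nat \<Rightarrow> real" where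
  "G u = (\<lambda>j. Av u j - lt u * (\<bar>u j\<bar> powr (p-1) * u j))"

lemma lt_diff:
  "lt u - lam = 2 * lam * (h * ip w (\<lambda>j. u j - us j)) + h * ip (Av (\<lambda>j. u j - us j)) (\<lambda>j. u j - us j)"
proof -
  define e where "e = (\<lambda>j. u j - us j)"
  have ue: "ip (Av u) u = ip (Av (\<lambda>j. us j + e j)) (\<lambda>j. us j + e j)"
    by (intro ip_cong Av_cong) (auto simp: e_def)
  have "ip (Av (\<lambda>j. us j + e j)) (\<lambda>j. us j + e j) = ip (Av us) us + ip (Av us) e + ip (Av e) us + ip (Av e) e"
    by (simp add: Av_add ip_add_left ip_add_right)
  also have "\<dots> = lam / h + 2 * lam * ip w e + ip (Av e) e"
    by (simp add: ip_Av_us ip_w_us Av_sym[of e us] ip_comm[of e])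
  finally show ?thesis using ue h_pos unfolding lt_def e_def[symmetric]
    by (simp add: field_simps)
qed

lemma r_small:
  assumes eps: "0 < \<epsilon>"
  shows "\<exists>\<rho>>0. \<forall>u. qn u = 1 \<and> nrm (\<lambda>j. u j - us j) < \<rho> \<longrightarrow>
     nrm (\<lambda>j. G u j - Hv (\<lambda>j. (u j - us j) - (h * ip w (\<lambda>j. u j - us j)) * us j) j)
        \<le> \<epsilon> * nrm (\<lambda>j. u j - us j)"
proof -
  define Gb where "Gb = real M * (nrm us + 1) powr p"
  have Gb0: "0 \<le> Gb" by (simp add: Gb_def)
  define \<epsilon>1 where "\<epsilon>1 = \<epsilon> / (3 * (lam + 1))"
  define Cb where "Cb = (p - 1) * lam * nrm w + 2 * lam * Gb + 1"
  have Cb1: "1 \<le> Cb" using p_gt lam_nn Gb0 nrm_nonneg[of w] by (simp add: Cb_def)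
  define \<epsilon>2 where "\<epsilon>2 = \<epsilon> / (6 * Cb)"
  define \<rho>3 where "\<rho>3 = min 1 (\<epsilon> / (6 * (h * cA * Gb + 1)))"
  have e1: "0 < \<epsilon>1" using eps lam_nn by (simp add: \<epsilon>1_def)
  have e2: "0 < \<epsilon>2" using eps Cb1 by (simp add: \<epsilon>2_def)
  have hcg: "0 \<le> h * cA * Gb" using h_pos cA_pos Gb0 by simp
  have r3: "0 < \<rho>3" using eps hcg by (simp add: \<rho>3_def)
  obtain \<rho>1 where \<rho>1: "\<rho>1 > 0" "\<forall>e. nrm e < \<rho>1 \<longrightarrow>
     nrm (\<lambda>j. \<bar>us j + e j\<bar> powr (p-1) * (us j + e j) - w j - p * \<bar>us j\<bar> powr (p-1) * e j) \<le> \<epsilon>1 * nrm e"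
    using g_rem[OF e1] by (elim exE conjE) (rule that)
  obtain \<rho>2 where \<rho>2: "\<rho>2 > 0" "\<forall>u. qn u = 1 \<and> nrm (\<lambda>j. u j - us j) < \<rho>2 \<longrightarrow>
            \<bar>h * ip w (\<lambda>j. u j - us j)\<bar> \<le> \<epsilon>2 * nrm (\<lambda>j. u j - us j)"
    using beta_small[OF e2] by (elim exE conjE) (rule that)
  show ?thesis
  proof (intro exI[of _ "min \<rho>1 (min \<rho>2 \<rho>3)"] conjI allI impI)
    show "0 < min \<rho>1 (min \<rho>2 \<rho>3)" using \<rho>1 \<rho>2 r3 by simp
    fix u assume u: "qn u = 1 \<and> nrm (\<lambda>j. u j - us j) < min \<rho>1 (min \<rho>2 \<rho>3)"
    define e where "e = (\<lambda>j. u j - us j)"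
    define \<beta> where "\<beta> = h * ip w e"
    define n where "n = nrm e"
    have n0: "0 \<le> n" by (simp add: n_def nrm_nonneg)
    have n1: "n < \<rho>1" "n < \<rho>2" "n < \<rho>3" using u by (auto simp: n_def e_def)
    define R where "R = (\<lambda>j. \<bar>us j + e j\<bar> powr (p-1) * (us j + e j) - w j - p * \<bar>us j\<bar> powr (p-1) * e j)"
    define gu where "gu = (\<lambda>j. \<bar>u j\<bar> powr (p-1) * u j)"
    have nR: "nrm R \<le> \<epsilon>1 * n" using \<rho>1(2) n1 by (simp add: R_def n_def)
    have bb: "\<bar>\<beta>\<bar> \<le> \<epsilon>2 * n" using \<rho>2(2) n1 u by (simp add: \<beta>_def n_def e_def)
    have ltb: "\<bar>lt u - lam\<bar> \<le> 2 * lam * (\<epsilon>2 * n) + h * cA * (n * n)"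
    proof -
      have "\<bar>ip (Av e) e\<bar> \<le> nrm (Av e) * nrm e" by (rule CS)
      also have "\<dots> \<le> cA * n * n" using Av_bound[of e] n0 by (simp add: n_def mult_right_mono)
      finally have a: "\<bar>h * ip (Av e) e\<bar> \<le> h * cA * (n * n)" using h_pos
        by (simp add: abs_mult mult.assoc mult_left_mono)
      have b: "\<bar>2 * lam * \<beta>\<bar> \<le> 2 * lam * (\<epsilon>2 * n)" using bb lam_nn
        by (simp add: abs_mult mult_left_mono)
      show ?thesis using lt_diff[of u] a b unfolding e_def[symmetric] \<beta>_def[symmetric] by linarith
    qed
    have ngu: "nrm gu \<le> Gb"
    proof -
      have "nrm gu \<le> (\<Sum>j<M. \<bar>gu j\<bar>)" unfolding nrm_def by (rule L2_set_le_sum_abs)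
      also have "\<dots> \<le> (\<Sum>j<M. (nrm us + 1) powr p)"
      proof (rule sum_mono)
        fix j assume j: "j \<in> {..<M}"
        have uj: "u j = us j + e j" by (simp add: e_def)
        have "\<bar>u j\<bar> \<le> \<bar>us j\<bar> + \<bar>e j\<bar>" unfolding uj by (rule abs_triangle_ineq)
        also have "\<dots> \<le> nrm us + 1" using comp_le[of j us] comp_le[of j e] j n1 \<rho>3_def
          by (simp add: n_def)
        finally have "\<bar>u j\<bar> \<le> nrm us + 1" .
        then show "\<bar>gu j\<bar> \<le> (nrm us + 1) powr p" unfolding gu_def abs_g[OF p_gt]
          using p_gt by (intro powr_mono2) auto
      qed
      finally show ?thesis by (simp add: Gb_def)
    qed
    have pt: "G u j - Hv (\<lambda>j. e j - \<beta> * us j) j = (- lam) * R j + (- (lt u - lam)) * gu j + ((1 - p) * lam * \<beta>) * w j"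
      if j: "j < M" for j
    proof -
      have Au: "Av u j = lam * w j + Av e j"
      proof -
        have "Av u j = Av (\<lambda>j. us j + e j) j" by (rule Av_cong) (auto simp: e_def j)
        then show ?thesis by (simp add: Av_add Av_us j)
      qed
      have Hx: "Hv (\<lambda>j. e j - \<beta> * us j) j = Av e j - p * lam * \<bar>us j\<bar> powr (p-1) * e j - \<beta> * ((1 - p) * lam * w j)"
        by (simp add: Hv_diff Hv_scale Hus j Hv_Av[of e j])
      have "us j + e j = u j" by (simp add: e_def)
      then show ?thesis unfolding G_def R_def gu_def using Au Hx
        by (simp add: algebra_simps)
    qed
    have "nrm (\<lambda>j. G u j - Hv (\<lambda>j. e j - \<beta> * us j) j)
        = nrm (\<lambda>j. (- lam) * R j + (- (lt u - lam)) * gu j + ((1 - p) * lam * \<beta>) * w j)"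
      by (rule nrm_cong) (simp add: pt)
    also have "\<dots> \<le> nrm (\<lambda>j. (- lam) * R j) + nrm (\<lambda>j. (- (lt u - lam)) * gu j) + nrm (\<lambda>j. ((1 - p) * lam * \<beta>) * w j)"
    proof -
      define vA where "vA = (\<lambda>j. (- lam) * R j)"
      define vB where "vB = (\<lambda>j. (- (lt u - lam)) * gu j)"
      define vC where "vC = (\<lambda>j. ((1 - p) * lam * \<beta>) * w j)"
      have "nrm (\<lambda>j. vA j + vB j + vC j) \<le> nrm vA + nrm vB + nrm vC"
        using nrm_add[of "\<lambda>j. vA j + vB j" vC] nrm_add[of vA vB] by simp
      then show ?thesis by (simp add: vA_def vB_def vC_def)
    qed
    also have "\<dots> = lam * nrm R + \<bar>lt u - lam\<bar> * nrm gu + (p - 1) * lam * \<bar>\<beta>\<bar> * nrm w"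
      using nrm_scale[of "-lam" R] nrm_scale[of "-(lt u - lam)" gu] nrm_scale[of "(1-p)*lam*\<beta>" w] lam_nn p_gt
      by (simp add: abs_mult abs_minus_commute)
    also have "\<dots> \<le> lam * (\<epsilon>1 * n) + (2 * lam * (\<epsilon>2 * n) + h * cA * (n * n)) * Gb + (p - 1) * lam * (\<epsilon>2 * n) * nrm w"
      using lam_nn p_gt nR ltb ngu bb nrm_nonneg[of w] nrm_nonneg[of gu]
      by (intro add_mono mult_left_mono mult_mono mult_right_mono) auto
    also have "\<dots> = n * (lam * \<epsilon>1 + \<epsilon>2 * ((p - 1) * lam * nrm w + 2 * lam * Gb) + (h * cA * Gb) * n)"
      by (simp add: algebra_simps)
    also have "\<dots> \<le> n * (\<epsilon> / 3 + \<epsilon> / 6 + \<epsilon> / 6)"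
    proof (rule mult_left_mono[OF _ n0])
      have a: "lam * \<epsilon>1 \<le> \<epsilon> / 3"
      proof -
        have "lam * \<epsilon>1 = \<epsilon> / 3 * (lam / (lam + 1))" using lam_nn by (simp add: \<epsilon>1_def field_simps)
        also have "\<dots> \<le> \<epsilon> / 3 * 1" using lam_nn eps by (intro mult_left_mono) auto
        finally show ?thesis by simp
      qed
      have b: "\<epsilon>2 * ((p - 1) * lam * nrm w + 2 * lam * Gb) \<le> \<epsilon> / 6"
      proof -
        have "\<epsilon>2 * ((p - 1) * lam * nrm w + 2 * lam * Gb) \<le> \<epsilon>2 * Cb" using e2 by (simp add: Cb_def)
        also have "\<dots> = \<epsilon> / 6" using Cb1 by (simp add: \<epsilon>2_def)
        finally show ?thesis .
      qed
      have c: "(h * cA * Gb) * n \<le> \<epsilon> / 6"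
      proof -
        have "(h * cA * Gb) * n \<le> (h * cA * Gb + 1) * (\<epsilon> / (6 * (h * cA * Gb + 1)))"
          using n1(3) hcg n0 unfolding \<rho>3_def by (intro mult_mono) auto
        also have "\<dots> = \<epsilon> / 6" using hcg by (simp add: field_simps)
        finally show ?thesis .
      qed
      show "lam * \<epsilon>1 + \<epsilon>2 * ((p - 1) * lam * nrm w + 2 * lam * Gb) + h * cA * Gb * n \<le> \<epsilon> / 3 + \<epsilon> / 6 + \<epsilon> / 6"
        using a b c by linarith
    qed
    also have "\<dots> \<le> \<epsilon> * n" using n0 eps by (simp add: algebra_simps)
    finally show "nrm (\<lambda>j. G u j - Hv (\<lambda>j. (u j - us j) - (h * ip w (\<lambda>j. u j - us j)) * us j) j)
        \<le> \<epsilon> * nrm (\<lambda>j. u j - us j)" by (simp add: e_def \<beta>_def n_def)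
  qed
qed


definition cN :: real where "cN = (SOME c. c > 0 \<and> (\<forall>\<xi>. ip w \<xi> = 0 \<longrightarrow> c * ip \<xi> \<xi> \<le> ip (Hv \<xi>) \<xi>))"
lemma cN: "cN > 0" "\<And>\<xi>. ip w \<xi> = 0 \<Longrightarrow> cN * ip \<xi> \<xi> \<le> ip (Hv \<xi>) \<xi>"
proof -
  have "cN > 0 \<and> (\<forall>\<xi>. ip w \<xi> = 0 \<longrightarrow> cN * ip \<xi> \<xi> \<le> ip (Hv \<xi>) \<xi>)"
    unfolding cN_def using ND' by (rule someI_ex)
  then show "cN > 0" "\<And>\<xi>. ip w \<xi> = 0 \<Longrightarrow> cN * ip \<xi> \<xi> \<le> ip (Hv \<xi>) \<xi>" by auto
qed

definition a1 :: real where "a1 = 1 + \<alpha> + sK"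
lemma a1_ge: "1 \<le> a1" using alpha_half sK_nonneg by (simp add: a1_def)
definition \<kappa>1 :: real where "\<kappa>1 = min (1/2) (cN\<^sup>2 / (8 * cH * a1\<^sup>2))"
lemma \<kappa>1_pos: "0 < \<kappa>1" "\<kappa>1 \<le> 1/2"
  using cN(1) cH_pos a1_ge by (auto simp: \<kappa>1_def)
definition \<epsilon>r :: real where "\<epsilon>r = cN / (8 * a1)"
lemma \<epsilon>r_pos: "0 < \<epsilon>r" "\<epsilon>r \<le> cN / 2"
  using cN(1) a1_ge by (auto simp: \<epsilon>r_def field_simps)

lemma step_core:
  fixes \<xi> d r :: "nat \<Rightarrow> real" and \<tau> :: real
  assumes tau: "0 < \<tau>" and xi: "ip w \<xi> = 0"
    and Bd: "\<And>j. j < M \<Longrightarrow> (1/\<tau> + \<alpha>) * d j + Kv d j = Hv \<xi> j + r j"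
    and rb: "nrm r \<le> \<epsilon>r * nrm \<xi>"
  shows "ip (Hv (\<lambda>j. \<xi> j - (d j - (h * ip w d) * us j))) (\<lambda>j. \<xi> j - (d j - (h * ip w d) * us j))
           \<le> (1 - \<kappa>1 * (\<tau> / (1 + \<tau>))) * ip (Hv \<xi>) \<xi>"
    and "nrm d \<le> 2 * (\<tau> / (1 + \<tau>)) * (cH + cN) * nrm \<xi>"
proof -
  define c where "c = 1/\<tau> + \<alpha>"
  define s where "s = \<tau> / (1 + \<tau>)"
  define Bv where "Bv = (\<lambda>j. c * d j + Kv d j)"
  define \<beta> where "\<beta> = h * ip w d"
  define N2 where "N2 = ip (Hv \<xi>) \<xi>"
  define X where "X = nrm \<xi>"
  define D where "D = nrm d"
  define \<Lambda> where "\<Lambda> = c + sK"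
  define T where "T = 1 + 2 / \<tau>"
  have X0: "0 \<le> X" and D0: "0 \<le> D" by (simp_all add: X_def D_def nrm_nonneg)
  have c_pos: "0 < c"
  proof -
    have "0 < 1/\<tau>" using tau by simp
    then show ?thesis using alpha_half unfolding c_def by linarith
  qed
  have s_pos: "0 < s" "s \<le> 1" using tau by (simp_all add: s_def)
  have T_pos: "0 < T"
  proof -
    have "0 < 2/\<tau>" using tau by simp
    then show ?thesis unfolding T_def by linarith
  qed
  have \<Lambda>_pos: "0 < \<Lambda>" using c_pos sK_nonneg by (simp add: \<Lambda>_def)
  have rX: "nrm r \<le> \<epsilon>r * X" using rb by (simp add: X_def)
  have N2lo: "cN * X\<^sup>2 \<le> N2" using cN(2)[OF xi] by (simp add: N2_def X_def ip_self)
  have N2hi: "N2 \<le> cH * X\<^sup>2" using ip_Hv_le[of \<xi>] by (simp add: N2_def X_def)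
  have Hx: "ip (Hv \<xi>) x = ip Bv x - ip r x" for x
  proof -
    have "ip (Hv \<xi>) x = ip (\<lambda>j. Bv j - r j) x" by (rule ip_cong) (auto simp: Bv_def c_def Bd)
    then show ?thesis by (simp add: ip_diff_left)
  qed
  have nB: "nrm Bv \<le> \<Lambda> * D"
  proof -
    have "nrm Bv \<le> nrm (\<lambda>j. c * d j) + nrm (Kv d)" unfolding Bv_def by (rule nrm_add)
    also have "\<dots> \<le> c * D + sK * D" using c_pos Kv_bound[of d] by (simp add: nrm_scale D_def)
    finally show ?thesis by (simp add: \<Lambda>_def algebra_simps)
  qed
  have low: "cN * X \<le> 2 * \<Lambda> * D"
  proof -
    have "N2 = ip Bv \<xi> - ip r \<xi>" by (simp add: N2_def Hx)
    also have "\<dots> \<le> nrm Bv * X + nrm r * X" using CS[of Bv \<xi>] CS[of r \<xi>] by (simp add: X_def)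
    also have "\<dots> \<le> \<Lambda> * D * X + \<epsilon>r * X * X" using nB rX X0 by (intro add_mono mult_right_mono) auto
    also have "\<dots> \<le> \<Lambda> * D * X + cN / 2 * X * X" using \<epsilon>r_pos X0 by (intro add_left_mono mult_right_mono) auto
    finally have "cN * X * X \<le> \<Lambda> * D * X + cN / 2 * X * X" using N2lo by (simp add: power2_eq_square)
    then have "(cN / 2 * X) * X \<le> (\<Lambda> * D) * X" by (simp add: algebra_simps)
    then have "cN / 2 * X \<le> \<Lambda> * D" if "X > 0" using that by simp
    then show ?thesis using X0 \<Lambda>_pos D0 cN(1) by (cases "X > 0") auto
  qed
  have marg: "T * D\<^sup>2 \<le> 2 * ip Bv d - ip (Hv d) d - (p - 1) * lam * \<beta>\<^sup>2 / h"
    using margin[OF tau, of d] by (simp add: T_def D_def ip_self Bv_def c_def \<beta>_def)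
  have phi: "ip (Hv (\<lambda>j. \<xi> j - (d j - \<beta> * us j))) (\<lambda>j. \<xi> j - (d j - \<beta> * us j))
     = N2 - 2 * ip Bv d + 2 * ip r d + ip (Hv d) d + (p - 1) * lam * \<beta>\<^sup>2 / h"
    using Phi_identity[OF xi, of d] by (simp add: \<beta>_def N2_def Hx)
  have rd0: "ip r d \<le> nrm r * D" using CS[of r d] abs_ge_self[of "ip r d"] by (simp add: D_def)
  have rd: "2 * ip r d \<le> 2 * (\<epsilon>r * X) * D" using rd0 mult_right_mono[OF rX D0] by simp
  have \<Lambda>T: "\<Lambda> \<le> a1 * T"
    using tau alpha_half sK_nonneg a1_ge by (simp add: \<Lambda>_def c_def T_def a1_def field_simps)
  have rD: "2 * (\<epsilon>r * X) * D \<le> T / 2 * D\<^sup>2"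
  proof -
    have "2 * (\<epsilon>r * X) * D = (2 * \<epsilon>r) * (cN * X) * D / cN" using cN(1) by simp
    also have "\<dots> \<le> (2 * \<epsilon>r) * (2 * \<Lambda> * D) * D / cN"
      using low \<epsilon>r_pos D0 cN(1) by (intro divide_right_mono mult_right_mono mult_left_mono) auto
    also have "\<dots> = \<Lambda> * D\<^sup>2 / (2 * a1)" using cN(1) a1_ge by (simp add: \<epsilon>r_def power2_eq_square field_simps)
    also have "\<dots> \<le> a1 * T * D\<^sup>2 / (2 * a1)" using \<Lambda>T a1_ge by (intro divide_right_mono mult_right_mono) auto
    also have "\<dots> = T / 2 * D\<^sup>2" using a1_ge by simp
    finally show ?thesis .
  qed
  have sT: "s * \<Lambda>\<^sup>2 \<le> a1\<^sup>2 * T"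
  proof -
    have L: "\<Lambda> \<le> a1 * ((1 + \<tau>) / \<tau>)" using tau alpha_half sK_nonneg
      by (simp add: \<Lambda>_def c_def a1_def field_simps)
    have "s * \<Lambda>\<^sup>2 \<le> s * (a1 * ((1 + \<tau>) / \<tau>))\<^sup>2"
      using L \<Lambda>_pos s_pos by (intro mult_left_mono power_mono) auto
    also have "\<dots> = a1\<^sup>2 * ((1 + \<tau>) / \<tau>)"
    proof -
      have t1: "1 + \<tau> \<noteq> 0" "\<tau> \<noteq> 0" "\<tau> * \<tau> + \<tau> * (\<tau> * \<tau>) \<noteq> 0"
        using tau mult_pos_pos[OF tau tau] mult_pos_pos[OF tau mult_pos_pos[OF tau tau]] by linarith+
      show ?thesis unfolding s_def power2_eq_square using t1 by (simp add: field_simps)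
    qed
    also have "\<dots> \<le> a1\<^sup>2 * T" using tau by (intro mult_left_mono) (auto simp: T_def field_simps)
    finally show ?thesis .
  qed
  have kap: "\<kappa>1 * s * N2 \<le> T / 2 * D\<^sup>2"
  proof -
    have N0: "0 \<le> N2" using N2lo cN(1) by (smt (verit) mult_nonneg_nonneg zero_le_power2)
    have "\<kappa>1 * s * N2 \<le> (cN\<^sup>2 / (8 * cH * a1\<^sup>2)) * s * (cH * X\<^sup>2)"
      using N2hi N0 s_pos cH_pos by (intro mult_mono) (auto simp: \<kappa>1_def)
    also have "\<dots> = cN\<^sup>2 * X\<^sup>2 * (s * \<Lambda>\<^sup>2) / (8 * a1\<^sup>2 * \<Lambda>\<^sup>2)" using cH_pos \<Lambda>_pos a1_ge by (simp add: field_simps)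
    also have "\<dots> \<le> cN\<^sup>2 * X\<^sup>2 * (a1\<^sup>2 * T) / (8 * a1\<^sup>2 * \<Lambda>\<^sup>2)"
      using sT by (intro divide_right_mono mult_left_mono) auto
    also have "\<dots> = (cN * X)\<^sup>2 * T / (8 * \<Lambda>\<^sup>2)" using a1_ge by (simp add: power_mult_distrib)
    also have "\<dots> \<le> (2 * \<Lambda> * D)\<^sup>2 * T / (8 * \<Lambda>\<^sup>2)"
      using low cN(1) X0 T_pos by (intro divide_right_mono mult_right_mono power_mono) auto
    also have "\<dots> = T / 2 * D\<^sup>2" using \<Lambda>_pos by (simp add: power2_eq_square field_simps)
    finally show ?thesis .
  qed
  show "ip (Hv (\<lambda>j. \<xi> j - (d j - (h * ip w d) * us j))) (\<lambda>j. \<xi> j - (d j - (h * ip w d) * us j))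
           \<le> (1 - \<kappa>1 * (\<tau> / (1 + \<tau>))) * ip (Hv \<xi>) \<xi>"
    using phi marg rd rD kap unfolding \<beta>_def[symmetric] s_def[symmetric] N2_def[symmetric]
    by (simp add: algebra_simps)
  have "c * D\<^sup>2 \<le> ip Bv d"
    using Kv_psd[of d] by (simp add: Bv_def ip_add_left ip_scale_left ip_self D_def)
  also have "ip Bv d = ip (Hv \<xi>) d + ip r d" using Hx[of d] by simp
  also have "\<dots> \<le> cH * X * D + \<epsilon>r * X * D"
  proof (rule add_mono)
    have "ip (Hv \<xi>) d \<le> nrm (Hv \<xi>) * D" using CS[of "Hv \<xi>" d] abs_ge_self[of "ip (Hv \<xi>) d"] by (simp add: D_def)
    also have "\<dots> \<le> cH * X * D" using Hv_bound[of \<xi>] D0 by (simp add: X_def mult_right_mono)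
    finally show "ip (Hv \<xi>) d \<le> cH * X * D" .
    show "ip r d \<le> \<epsilon>r * X * D" using rd0 mult_right_mono[OF rX D0] by simp
  qed
  finally have cD: "c * D * D \<le> (cH + \<epsilon>r) * X * D" by (simp add: power2_eq_square algebra_simps)
  have cD2: "c * D \<le> (cH + cN) * X"
  proof (cases "D > 0")
    case True
    then have "c * D \<le> (cH + \<epsilon>r) * X" using cD by simp
    also have "\<dots> \<le> (cH + cN) * X" using \<epsilon>r_pos cN(1) X0 by (intro mult_right_mono) auto
    finally show ?thesis .
  next
    case False then show ?thesis using D0 X0 cH_pos cN(1) by simp
  qed
  have ic: "1 / c \<le> 2 * s"
  proof -
    have A: "\<tau> \<le> 2 * \<alpha> * \<tau>" using tau alpha_half mult_right_mono[of 1 "2*\<alpha>" \<tau>] by simp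
    have pa: "0 < 1 + \<alpha> * \<tau>" using tau alpha_half by (simp add: add_pos_nonneg)
    have "1 / c = (2 * \<tau>) / (2 + 2 * \<alpha> * \<tau>)" using tau pa by (simp add: c_def field_simps)
    also have "\<dots> \<le> (2 * \<tau>) / (1 + \<tau>)"
    proof (rule frac_le)
      show "1 + \<tau> \<le> 2 + 2 * \<alpha> * \<tau>" using A by linarith
    qed (use tau in auto)
    finally show ?thesis by (simp add: s_def)
  qed
  have "D = (c * D) * (1 / c)" using c_pos by simp
  also have "\<dots> \<le> ((cH + cN) * X) * (2 * s)"
    by (rule mult_mono[OF cD2 ic]) (use c_pos cH_pos cN(1) X0 in auto)
  finally show "nrm d \<le> 2 * (\<tau> / (1 + \<tau>)) * (cH + cN) * nrm \<xi>" by (simp add: D_def s_def X_def algebra_simps)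
qed


definition xi :: "(nat \<Rightarrow> real) \<Rightarrow> nat \<Rightarrow> real" where
  "xi u = (\<lambda>j. (u j - us j) - (h * ip w (\<lambda>j. u j - us j)) * us j)"
definition Nsq :: "(nat \<Rightarrow> real) \<Rightarrow> real" where
  "Nsq u = ip (Hv (xi u)) (xi u)"
definition cP :: real where "cP = 1 + h * nrm w * nrm us"
lemma cP_ge: "1 \<le> cP" using h_pos nrm_nonneg[of w] nrm_nonneg[of us] by (simp add: cP_def)

lemma xi_w: "ip w (xi u) = 0"
  using h_pos by (simp add: xi_def ip_diff_right ip_scale_right ip_w_us)

lemma nrm_xi_le: "nrm (xi u) \<le> cP * nrm (\<lambda>j. u j - us j)"
proof -
  define e where "e = (\<lambda>j. u j - us j)"
  have "nrm (xi u) \<le> nrm e + nrm (\<lambda>j. (h * ip w e) * us j)"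
  proof -
    have "xi u = (\<lambda>j. e j - (h * ip w e) * us j)" by (simp add: xi_def e_def)
    then show ?thesis using nrm_diff[of e "\<lambda>j. (h * ip w e) * us j"] by simp
  qed
  also have "\<dots> = nrm e + \<bar>h * ip w e\<bar> * nrm us" by (simp add: nrm_scale)
  also have "\<dots> \<le> nrm e + (h * (nrm w * nrm e)) * nrm us"
    using CS[of w e] h_pos nrm_nonneg[of us] by (intro add_left_mono mult_right_mono) (auto simp: abs_mult)
  also have "\<dots> = cP * nrm e" by (simp add: cP_def algebra_simps)
  finally show ?thesis by (simp add: e_def)
qed

lemma Nsq_upper: "Nsq u \<le> cH * cP\<^sup>2 * (nrm (\<lambda>j. u j - us j))\<^sup>2"
proof -
  have "Nsq u \<le> cH * (nrm (xi u))\<^sup>2" unfolding Nsq_def by (rule ip_Hv_le)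
  also have "\<dots> \<le> cH * (cP * nrm (\<lambda>j. u j - us j))\<^sup>2"
    using cH_pos nrm_xi_le[of u] nrm_nonneg[of "xi u"] by (intro mult_left_mono power_mono) auto
  finally show ?thesis by (simp add: power_mult_distrib)
qed

lemma Nsq_nonneg: "0 \<le> Nsq u"
proof -
  have "cN * ip (xi u) (xi u) \<le> Nsq u" unfolding Nsq_def by (rule cN(2)[OF xi_w])
  moreover have "0 \<le> cN * ip (xi u) (xi u)" using cN(1) ip_self_nonneg by simp
  ultimately show ?thesis by linarith
qed

lemma e_le_xi: "\<exists>\<rho>>0. \<forall>u. qn u = 1 \<and> nrm (\<lambda>j. u j - us j) < \<rho> \<longrightarrow>
   nrm (\<lambda>j. u j - us j) \<le> 2 * nrm (xi u)"
proof -
  have ep: "0 < 1 / (2 * (nrm us + 1))" using nrm_nonneg[of us] by simp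
  obtain \<rho> where \<rho>: "\<rho> > 0" "\<forall>u. qn u = 1 \<and> nrm (\<lambda>j. u j - us j) < \<rho> \<longrightarrow>
            \<bar>h * ip w (\<lambda>j. u j - us j)\<bar> \<le> 1 / (2 * (nrm us + 1)) * nrm (\<lambda>j. u j - us j)"
    using beta_small[OF ep] by (elim exE conjE) (rule that)
  show ?thesis
  proof (intro exI[of _ \<rho>] conjI allI impI)
    fix u assume u: "qn u = 1 \<and> nrm (\<lambda>j. u j - us j) < \<rho>"
    define e where "e = (\<lambda>j. u j - us j)"
    define \<beta> where "\<beta> = h * ip w e"
    have bb: "\<bar>\<beta>\<bar> \<le> 1 / (2 * (nrm us + 1)) * nrm e" using \<rho>(2) u by (simp add: \<beta>_def e_def)
    have "nrm e = nrm (\<lambda>j. xi u j + \<beta> * us j)" by (rule nrm_cong) (simp add: xi_def e_def \<beta>_def)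
    also have "\<dots> \<le> nrm (xi u) + \<bar>\<beta>\<bar> * nrm us" using nrm_add[of "xi u" "\<lambda>j. \<beta> * us j"] by (simp add: nrm_scale)
    also have "\<dots> \<le> nrm (xi u) + (1 / (2 * (nrm us + 1)) * nrm e) * nrm us"
      using bb nrm_nonneg[of us] by (intro add_left_mono mult_right_mono) auto
    also have "\<dots> \<le> nrm (xi u) + nrm e / 2"
    proof -
      have "(1 / (2 * (nrm us + 1)) * nrm e) * nrm us = nrm e / 2 * (nrm us / (nrm us + 1))"
        using nrm_nonneg[of us] by (simp add: field_simps)
      also have "\<dots> \<le> nrm e / 2 * 1" using nrm_nonneg[of us] nrm_nonneg[of e] by (intro mult_left_mono) auto
      finally show ?thesis by simp
    qed
    finally show "nrm (\<lambda>j. u j - us j) \<le> 2 * nrm (xi u)" by (simp add: e_def)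
  qed (use \<rho> in auto)
qed

lemma Nsq_lower: "\<exists>\<rho>>0. \<forall>u. qn u = 1 \<and> nrm (\<lambda>j. u j - us j) < \<rho> \<longrightarrow>
   cN / 4 * (nrm (\<lambda>j. u j - us j))\<^sup>2 \<le> Nsq u"
proof -
  obtain \<rho> where \<rho>: "\<rho> > 0" "\<forall>u. qn u = 1 \<and> nrm (\<lambda>j. u j - us j) < \<rho> \<longrightarrow>
   nrm (\<lambda>j. u j - us j) \<le> 2 * nrm (xi u)" using e_le_xi by (elim exE conjE) (rule that)
  show ?thesis
  proof (intro exI[of _ \<rho>] conjI allI impI)
    fix u assume u: "qn u = 1 \<and> nrm (\<lambda>j. u j - us j) < \<rho>"
    have a: "nrm (\<lambda>j. u j - us j) \<le> 2 * nrm (xi u)" using \<rho>(2) u by blast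
    have "cN / 4 * (nrm (\<lambda>j. u j - us j))\<^sup>2 \<le> cN / 4 * (2 * nrm (xi u))\<^sup>2"
      using a cN(1) nrm_nonneg[of "\<lambda>j. u j - us j"] by (intro mult_left_mono power_mono) auto
    also have "\<dots> = cN * ip (xi u) (xi u)" by (simp add: ip_self power2_eq_square)
    also have "\<dots> \<le> Nsq u" unfolding Nsq_def by (rule cN(2)[OF xi_w])
    finally show "cN / 4 * (nrm (\<lambda>j. u j - us j))\<^sup>2 \<le> Nsq u" .
  qed (use \<rho> in auto)
qed


lemma step:
  "\<exists>\<rho>>0. \<exists>C1>0. \<forall>\<tau> u d u'. 0 < \<tau> \<and> qn u = 1 \<and> nrm (\<lambda>j. u j - us j) < \<rho>
      \<and> (\<forall>j<M. (1/\<tau> + \<alpha>) * d j + Kv d j = G u j)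
      \<and> (\<forall>j<M. u' j = (u j - d j) / (qn (\<lambda>j. u j - d j)) powr (1 / (p + 1)))
      \<longrightarrow> qn u' = 1 \<and> Nsq u' \<le> (1 - \<kappa>1 / 2 * (\<tau> / (1 + \<tau>))) * Nsq u
          \<and> nrm (\<lambda>j. u' j - us j) \<le> C1 * nrm (\<lambda>j. u j - us j)"
proof -
  obtain \<rho>a where \<rho>a: "\<rho>a > 0" "\<forall>u. qn u = 1 \<and> nrm (\<lambda>j. u j - us j) < \<rho>a \<longrightarrow>
   nrm (\<lambda>j. u j - us j) \<le> 2 * nrm (xi u)" using e_le_xi by (elim exE conjE) (rule that)
  have er2: "0 < \<epsilon>r / 2" using \<epsilon>r_pos by simp
  obtain \<rho>b where \<rho>b: "\<rho>b > 0" "\<forall>u. qn u = 1 \<and> nrm (\<lambda>j. u j - us j) < \<rho>b \<longrightarrow>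
     nrm (\<lambda>j. G u j - Hv (\<lambda>j. (u j - us j) - (h * ip w (\<lambda>j. u j - us j)) * us j) j)
        \<le> \<epsilon>r / 2 * nrm (\<lambda>j. u j - us j)"
    using r_small[OF er2] by (elim exE conjE) (rule that)
  define C4 where "C4 = 2 * (cH + cN) * cP"
  have C4pos: "0 < C4" using cH_pos cN(1) cP_ge by (simp add: C4_def)
  define R0 where "R0 = nrm us + 1 + C4"
  have R0pos: "0 < R0" using C4pos nrm_nonneg[of us] by (simp add: R0_def)
  define Lq where "Lq = h * (p + 1) * R0 powr p * real M"
  have Lqpos: "0 < Lq" using h_pos p_gt R0pos M_pos by (simp add: Lq_def)
  define \<rho>c where "\<rho>c = min 1 (\<kappa>1 / (4 * (Lq * C4)))"
  have \<rho>c: "0 < \<rho>c" "\<rho>c \<le> 1" "Lq * C4 * \<rho>c \<le> \<kappa>1 / 4"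
  proof -
    show "0 < \<rho>c" using \<kappa>1_pos Lqpos C4pos by (simp add: \<rho>c_def)
    show "\<rho>c \<le> 1" by (simp add: \<rho>c_def)
    have "Lq * C4 * \<rho>c \<le> Lq * C4 * (\<kappa>1 / (4 * (Lq * C4)))"
      using Lqpos C4pos by (intro mult_left_mono) (auto simp: \<rho>c_def)
    also have "\<dots> = \<kappa>1 / 4" using Lqpos C4pos by simp
    finally show "Lq * C4 * \<rho>c \<le> \<kappa>1 / 4" .
  qed
  define C1 where "C1 = 2 * (1 + C4) + 2 * nrm us * Lq * C4 + 1"
  have C1pos: "0 < C1"
  proof -
    have "0 \<le> 2 * nrm us * Lq * C4" using C4pos Lqpos nrm_nonneg[of us] by simp
    moreover have "0 < 2 * (1 + C4)" using C4pos by simp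
    ultimately show ?thesis unfolding C1_def by (intro add_pos_pos add_pos_nonneg) auto
  qed
  show ?thesis
  proof (rule exI[of _ "min \<rho>a (min \<rho>b \<rho>c)"], rule conjI)
    show "0 < min \<rho>a (min \<rho>b \<rho>c)" using \<rho>a \<rho>b \<rho>c by simp
  next
  show "\<exists>C1>0. \<forall>\<tau> u d u'. 0 < \<tau> \<and> qn u = 1 \<and> nrm (\<lambda>j. u j - us j) < min \<rho>a (min \<rho>b \<rho>c)
      \<and> (\<forall>j<M. (1/\<tau> + \<alpha>) * d j + Kv d j = G u j)
      \<and> (\<forall>j<M. u' j = (u j - d j) / (qn (\<lambda>j. u j - d j)) powr (1 / (p + 1)))
      \<longrightarrow> qn u' = 1 \<and> Nsq u' \<le> (1 - \<kappa>1 / 2 * (\<tau> / (1 + \<tau>))) * Nsq u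
          \<and> nrm (\<lambda>j. u' j - us j) \<le> C1 * nrm (\<lambda>j. u j - us j)"
  proof (rule exI[of _ C1], rule conjI[OF C1pos], intro allI impI)
    fix \<tau> u d u'
    assume A: "0 < \<tau> \<and> qn u = 1 \<and> nrm (\<lambda>j. u j - us j) < min \<rho>a (min \<rho>b \<rho>c)
      \<and> (\<forall>j<M. (1/\<tau> + \<alpha>) * d j + Kv d j = G u j)
      \<and> (\<forall>j<M. u' j = (u j - d j) / (qn (\<lambda>j. u j - d j)) powr (1 / (p + 1)))"
    have tau: "0 < \<tau>" and qu: "qn u = 1" using A by auto
    define e where "e = (\<lambda>j. u j - us j)"
    define \<xi> where "\<xi> = xi u"
    define s where "s = \<tau> / (1 + \<tau>)"
    have s01: "0 < s" "s \<le> 1" using tau by (auto simp: s_def)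
    have ne: "nrm e < \<rho>a" "nrm e < \<rho>b" "nrm e < \<rho>c" using A by (auto simp: e_def)
    have ne1: "nrm e < 1" using ne(3) \<rho>c(2) by linarith
    have ne0: "0 \<le> nrm e" by (rule nrm_nonneg)
    have exi: "nrm e \<le> 2 * nrm \<xi>" using \<rho>a(2) qu ne by (simp add: e_def \<xi>_def)
    define r where "r = (\<lambda>j. G u j - Hv \<xi> j)"
    have rb0: "nrm r \<le> \<epsilon>r / 2 * nrm e" using \<rho>b(2) qu ne
      by (simp add: r_def e_def \<xi>_def xi_def)
    have rb: "nrm r \<le> \<epsilon>r * nrm \<xi>"
    proof -
      have "\<epsilon>r / 2 * nrm e \<le> \<epsilon>r / 2 * (2 * nrm \<xi>)" by (rule mult_left_mono[OF exi]) (use \<epsilon>r_pos in simp)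
      then have "nrm r \<le> \<epsilon>r / 2 * (2 * nrm \<xi>)" using rb0 by linarith
      then show ?thesis by simp
    qed
    have Bd: "\<And>j. j < M \<Longrightarrow> (1/\<tau> + \<alpha>) * d j + Kv d j = Hv \<xi> j + r j" using A by (simp add: r_def)
    define \<zeta> where "\<zeta> = (\<lambda>j. \<xi> j - (d j - (h * ip w d) * us j))"
    have xw: "ip w \<xi> = 0" by (simp add: \<xi>_def xi_w)
    have core1: "ip (Hv \<zeta>) \<zeta> \<le> (1 - \<kappa>1 * s) * Nsq u"
      using step_core(1)[OF tau xw Bd rb] by (simp add: \<zeta>_def \<xi>_def s_def Nsq_def)
    have core2: "nrm d \<le> 2 * s * (cH + cN) * nrm \<xi>"
      using step_core(2)[OF tau xw Bd rb] by (simp add: s_def)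
    have dC: "nrm d \<le> s * C4 * nrm e"
    proof -
      have xe: "nrm \<xi> \<le> cP * nrm e" using nrm_xi_le[of u] by (simp add: \<xi>_def e_def)
      have "2 * s * (cH + cN) * nrm \<xi> \<le> 2 * s * (cH + cN) * (cP * nrm e)"
        by (rule mult_left_mono[OF xe]) (use s01 cH_pos cN(1) in simp)
      then have "nrm d \<le> 2 * s * (cH + cN) * (cP * nrm e)" using core2 by linarith
      then show ?thesis by (simp add: C4_def algebra_simps)
    qed
    have dC1: "nrm d \<le> C4 * nrm e"
    proof -
      have "s * C4 * nrm e \<le> 1 * C4 * nrm e" using s01 C4pos ne0 by (intro mult_right_mono) auto
      then show ?thesis using dC by simp
    qed
    have dC2: "nrm d \<le> C4"
    proof -
      have "C4 * nrm e \<le> C4 * 1" using ne1 C4pos by (intro mult_left_mono) auto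
      then show ?thesis using dC1 by simp
    qed
    define ut where "ut = (\<lambda>j. u j - d j)"
    define Q where "Q = qn ut"
    define \<delta> where "\<delta> = Lq * nrm d"
    have \<delta>0: "0 \<le> \<delta>" using Lqpos nrm_nonneg[of d] by (simp add: \<delta>_def)
    have \<delta>s: "\<delta> \<le> s * (\<kappa>1 / 4)"
    proof -
      have "\<delta> \<le> Lq * (s * C4 * nrm e)" using dC Lqpos by (simp add: \<delta>_def)
      also have "\<dots> \<le> Lq * (s * C4 * \<rho>c)" using Lqpos s01 C4pos ne by (intro mult_left_mono) auto
      also have "\<dots> = s * (Lq * C4 * \<rho>c)" by simp
      also have "\<dots> \<le> s * (\<kappa>1 / 4)" using \<rho>c(3) s01 by (intro mult_left_mono) auto
      finally show ?thesis .
    qed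
    have \<delta>h: "\<delta> \<le> 1/2"
    proof -
      have "s * (\<kappa>1 / 4) \<le> 1 * (1/2 / 4)" using s01 \<kappa>1_pos by (intro mult_mono) auto
      then show ?thesis using \<delta>s by simp
    qed
    have \<delta>C: "\<delta> \<le> Lq * C4 * nrm e" using dC1 Lqpos by (simp add: \<delta>_def mult.assoc mult_left_mono)
    have Qb: "\<bar>Q - 1\<bar> \<le> \<delta>"
    proof -
      have "\<bar>Q - 1\<bar> = \<bar>h * (\<Sum>j<M. \<bar>ut j\<bar> powr (p+1) - \<bar>u j\<bar> powr (p+1))\<bar>"
        using qu by (simp add: Q_def qn_def sum_subtractf right_diff_distrib)
      also have "\<dots> \<le> h * (\<Sum>j<M. \<bar>\<bar>ut j\<bar> powr (p+1) - \<bar>u j\<bar> powr (p+1)\<bar>)"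
        using h_pos by (simp add: abs_mult sum_abs)
      also have "\<dots> \<le> h * (\<Sum>j<M. (p+1) * R0 powr p * \<bar>d j\<bar>)"
      proof (intro mult_left_mono sum_mono)
        fix j assume j: "j \<in> {..<M}"
        have uj: "\<bar>u j\<bar> \<le> nrm us + 1"
        proof -
          have "\<bar>u j\<bar> \<le> \<bar>us j\<bar> + \<bar>e j\<bar>" by (simp add: e_def abs_triangle_ineq[of "us j" "u j - us j", simplified])
          also have "\<dots> \<le> nrm us + nrm e" using comp_le[of j us] comp_le[of j e] j by simp
          finally show ?thesis using ne1 by simp
        qed
        have dj: "\<bar>d j\<bar> \<le> C4" using comp_le[of j d] j dC2 by simp
        have a: "\<bar>u j\<bar> \<le> R0" using uj C4pos by (simp add: R0_def)
        have b: "\<bar>ut j\<bar> \<le> R0"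
        proof -
          have "\<bar>ut j\<bar> \<le> \<bar>u j\<bar> + \<bar>d j\<bar>" unfolding ut_def by (rule abs_triangle_ineq4)
          then show ?thesis using uj dj unfolding R0_def by linarith
        qed
        show "\<bar>\<bar>ut j\<bar> powr (p+1) - \<bar>u j\<bar> powr (p+1)\<bar> \<le> (p+1) * R0 powr p * \<bar>d j\<bar>"
          using k_lip[OF p_gt b a] by (simp add: ut_def)
      qed (use h_pos in simp)
      also have "\<dots> = h * (p+1) * R0 powr p * (\<Sum>j<M. \<bar>d j\<bar>)" by (simp add: sum_distrib_left mult.assoc)
      also have "\<dots> \<le> h * (p+1) * R0 powr p * (real M * nrm d)"
        using h_pos p_gt by (intro mult_left_mono sum_abs_le) auto
      also have "\<dots> = \<delta>" by (simp add: \<delta>_def Lq_def)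
      finally show ?thesis .
    qed
    define n where "n = Q powr (1 / (p + 1))"
    have q1: "1 \<le> p + 1" using p_gt by simp
    have nlo: "1 - \<delta> \<le> n" and nhi: "n \<le> 1 + \<delta>"
      using powr_near_one[OF q1 \<delta>h Qb] by (simp_all add: n_def)
    have npos: "0 < n" using nlo \<delta>h by linarith
    have Qpos: "0 < Q" using Qb \<delta>h by linarith
    have u'e: "\<And>j. j < M \<Longrightarrow> u' j = ut j / n" using A by (simp add: ut_def n_def Q_def)
    have "qn u' = 1"
    proof -
      have "qn u' = h * (\<Sum>j<M. \<bar>ut j\<bar> powr (p+1) / n powr (p+1))"
        unfolding qn_def by (intro arg_cong[where f="\<lambda>x. h * x"] sum.cong refl)
          (simp add: u'e abs_divide powr_divide npos less_imp_le)
      also have "\<dots> = Q / n powr (p+1)" by (simp add: Q_def qn_def sum_divide_distrib[symmetric])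
      also have "n powr (p+1) = Q" using Qpos p_gt by (simp add: n_def powr_powr)
      finally show ?thesis using Qpos by simp
    qed
    moreover
    have "Nsq u' \<le> (1 - \<kappa>1 / 2 * s) * Nsq u"
    proof -
      have xe: "xi u' j = (1 / n) * \<zeta> j" if j: "j < M" for j
      proof -
        have iw: "ip w (\<lambda>j. u' j - us j) = ip w ut / n - 1 / h"
        proof -
          have "ip w (\<lambda>j. u' j - us j) = ip w (\<lambda>j. (1/n) * ut j - us j)" by (rule ip_cong) (simp_all add: u'e)
          also have "\<dots> = (1/n) * ip w ut - 1 / h" by (simp only: ip_diff_right ip_scale_right ip_w_us)
          finally show ?thesis by simp
        qed
        have iw2: "ip w ut = ip w u - ip w d" by (simp add: ut_def ip_diff_right)
        have iw3: "ip w e = ip w u - 1 / h" by (simp add: e_def ip_diff_right ip_w_us)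
        show ?thesis using j npos h_pos
          by (simp add: xi_def iw u'e \<zeta>_def \<xi>_def iw2[unfolded ut_def] iw3[unfolded e_def] ut_def field_simps)
      qed
      have "Nsq u' = ip (Hv (\<lambda>j. (1/n) * \<zeta> j)) (\<lambda>j. (1/n) * \<zeta> j)"
        unfolding Nsq_def by (intro ip_cong Hv_cong) (simp_all add: xe)
      also have "\<dots> = (1/n) * ((1/n) * ip (Hv \<zeta>) \<zeta>)" by (simp only: Hv_scale ip_scale_left ip_scale_right)
      also have "\<dots> = ip (Hv \<zeta>) \<zeta> / n\<^sup>2" by (simp add: power2_eq_square)
      also have "\<dots> \<le> (1 - \<kappa>1 * s) * Nsq u / n\<^sup>2" using core1 npos by (simp add: divide_right_mono)
      also have "\<dots> \<le> (1 - \<kappa>1 * s) * Nsq u / (1 - \<delta>)\<^sup>2"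
      proof (rule divide_left_mono)
        show "0 \<le> (1 - \<kappa>1 * s) * Nsq u" using \<kappa>1_pos s01 Nsq_nonneg[of u]
          by (intro mult_nonneg_nonneg) (auto simp: mult_le_one)
        show "(1 - \<delta>)\<^sup>2 \<le> n\<^sup>2" using nlo \<delta>h by (intro power_mono) auto
        show "0 < n\<^sup>2 * (1 - \<delta>)\<^sup>2" using npos \<delta>h by simp
      qed
      also have "\<dots> \<le> (1 - \<kappa>1 / 2 * s) * Nsq u"
      proof -
        have d1: "0 < (1 - \<delta>)\<^sup>2" using \<delta>h by simp
        have "(1 - \<kappa>1 * s) \<le> (1 - \<kappa>1 / 2 * s) * (1 - \<delta>)\<^sup>2"
        proof -
          have "(1 - \<delta>)\<^sup>2 \<ge> 1 - 2 * \<delta>" by (simp add: power2_eq_square algebra_simps)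
          moreover have "0 \<le> 1 - \<kappa>1 / 2 * s"
          proof -
            have "\<kappa>1 / 2 * s \<le> (1/2) / 2 * 1" using \<kappa>1_pos s01 by (intro mult_mono) auto
            then show ?thesis by linarith
          qed
          ultimately have "(1 - \<kappa>1 / 2 * s) * (1 - 2 * \<delta>) \<le> (1 - \<kappa>1 / 2 * s) * (1 - \<delta>)\<^sup>2"
            by (intro mult_left_mono) auto
          moreover have "1 - \<kappa>1 * s \<le> (1 - \<kappa>1 / 2 * s) * (1 - 2 * \<delta>)"
          proof -
            define K where "K = \<kappa>1 * s"
            have K0: "0 \<le> K" using \<kappa>1_pos s01 by (simp add: K_def)
            have e1: "\<kappa>1 / 2 * s = K / 2" by (simp add: K_def)
            have e2: "\<delta> \<le> K / 4" using \<delta>s by (simp add: K_def mult.commute)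
            have e3: "(1 - K / 2) * (1 - 2 * \<delta>) = 1 - K / 2 - 2 * \<delta> + K * \<delta>" by (simp add: algebra_simps)
            have e4: "0 \<le> K * \<delta>" using K0 \<delta>0 by simp
            show ?thesis unfolding e1 e3 using e2 e4 by (simp add: K_def[symmetric])
          qed
          ultimately show ?thesis by linarith
        qed
        then have "(1 - \<kappa>1 * s) * Nsq u \<le> ((1 - \<kappa>1 / 2 * s) * (1 - \<delta>)\<^sup>2) * Nsq u"
          using Nsq_nonneg[of u] by (rule mult_right_mono)
        moreover have "((1 - \<kappa>1 / 2 * s) * (1 - \<delta>)\<^sup>2) * Nsq u = (1 - \<kappa>1 / 2 * s) * Nsq u * (1 - \<delta>)\<^sup>2"
          by (simp only: mult_ac)
        ultimately show ?thesis by (subst pos_divide_le_eq[OF d1]) (simp add: mult_ac)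
      qed
      finally show ?thesis .
    qed
    moreover
    have "nrm (\<lambda>j. u' j - us j) \<le> C1 * nrm e"
    proof -
      have "nrm (\<lambda>j. u' j - us j) = nrm (\<lambda>j. (1/n) * (e j - d j) + ((1 - n)/n) * us j)"
        using npos by (intro nrm_cong) (simp add: u'e ut_def e_def field_simps)
      also have "\<dots> \<le> (1/n) * nrm (\<lambda>j. e j - d j) + \<bar>(1 - n)/n\<bar> * nrm us"
      proof -
        define a where "a = 1/n"
        define b where "b = (1 - n)/n"
        have "nrm (\<lambda>j. a * (e j - d j) + b * us j) \<le> \<bar>a\<bar> * nrm (\<lambda>j. e j - d j) + \<bar>b\<bar> * nrm us"
          using nrm_add[of "\<lambda>j. a * (e j - d j)" "\<lambda>j. b * us j"] nrm_scale[of a "\<lambda>j. e j - d j"] nrm_scale[of b us]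
          by simp
        then show ?thesis using npos by (simp add: a_def[symmetric] b_def[symmetric]) (simp add: a_def)
      qed
      also have "\<dots> \<le> 2 * (nrm e + C4 * nrm e) + (2 * (Lq * C4 * nrm e)) * nrm us"
      proof (rule add_mono)
        have in2: "1/n \<le> 2" using nlo \<delta>h npos by (simp add: divide_le_eq)
        have "nrm (\<lambda>j. e j - d j) \<le> nrm e + C4 * nrm e" using nrm_diff[of e d] dC1 by linarith
        then show "(1/n) * nrm (\<lambda>j. e j - d j) \<le> 2 * (nrm e + C4 * nrm e)"
          using in2 npos nrm_nonneg[of "\<lambda>j. e j - d j"] by (intro mult_mono) auto
        have "\<bar>(1 - n)/n\<bar> = \<bar>1 - n\<bar> * (1/n)" using npos by (simp add: abs_divide)
        also have "\<dots> \<le> (Lq * C4 * nrm e) * 2"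
          using in2 npos nlo nhi \<delta>C by (intro mult_mono) auto
        finally have f: "\<bar>(1 - n)/n\<bar> \<le> (Lq * C4 * nrm e) * 2" .
        from mult_right_mono[OF f nrm_nonneg[of us]]
        show "\<bar>(1 - n)/n\<bar> * nrm us \<le> (2 * (Lq * C4 * nrm e)) * nrm us" by (simp add: mult_ac)
      qed
      also have "\<dots> \<le> C1 * nrm e" using ne0 by (simp add: C1_def algebra_simps)
      finally show ?thesis .
    qed
    ultimately show "qn u' = 1 \<and> Nsq u' \<le> (1 - \<kappa>1 / 2 * (\<tau> / (1 + \<tau>))) * Nsq u
          \<and> nrm (\<lambda>j. u' j - us j) \<le> C1 * nrm (\<lambda>j. u j - us j)"
      by (simp add: s_def e_def)
  qed
  qed
qed


lemma qn_cong: "(\<And>j. j < M \<Longrightarrow> u j = u' j) \<Longrightarrow> qn u = qn u'"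
  by (simp add: qn_def)

lemma converge:
  "\<exists>\<delta>>0. \<exists>C>0. \<exists>a>0. \<forall>u0 \<tau> u ut. qn u0 = 1 \<and> nrm (\<lambda>j. u0 j - us j) \<le> \<delta> \<and> 0 < \<tau>
     \<and> (\<forall>j<M. u 0 j = u0 j)
     \<and> (\<forall>n. \<forall>j<M. (1/\<tau> + \<alpha>) * (u n j - ut (Suc n) j) + Kv (\<lambda>j. u n j - ut (Suc n) j) j
               = Av (u n) j - (h * ip (Av (u n)) (u n) / ((qn (u n)) powr (1/(p+1))) powr (p+1)) * (\<bar>u n j\<bar> powr (p-1) * u n j)
             \<and> u (Suc n) j = ut (Suc n) j / (qn (ut (Suc n))) powr (1 / (p + 1)))
     \<longrightarrow> (\<forall>n. nrm (\<lambda>j. u n j - us j) \<le> C * exp (- (a * (\<tau> / (1 + \<tau>)) * real n)))"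
proof -
  obtain \<rho> C1 where \<rho>: "\<rho> > 0" "C1 > 0" and
    st: "\<And>\<tau> u d u'. 0 < \<tau> \<Longrightarrow> qn u = 1 \<Longrightarrow> nrm (\<lambda>j. u j - us j) < \<rho>
      \<Longrightarrow> (\<forall>j<M. (1/\<tau> + \<alpha>) * d j + Kv d j = G u j)
      \<Longrightarrow> (\<forall>j<M. u' j = (u j - d j) / (qn (\<lambda>j. u j - d j)) powr (1 / (p + 1)))
      \<Longrightarrow> qn u' = 1 \<and> Nsq u' \<le> (1 - \<kappa>1 / 2 * (\<tau> / (1 + \<tau>))) * Nsq u
          \<and> nrm (\<lambda>j. u' j - us j) \<le> C1 * nrm (\<lambda>j. u j - us j)"
    using step by blast
  obtain \<rho>L where \<rho>L: "\<rho>L > 0" and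
    lo: "\<And>u. qn u = 1 \<Longrightarrow> nrm (\<lambda>j. u j - us j) < \<rho>L \<Longrightarrow> cN / 4 * (nrm (\<lambda>j. u j - us j))\<^sup>2 \<le> Nsq u"
    using Nsq_lower by blast
  define \<rho>s where "\<rho>s = min \<rho> (min \<rho>L (\<rho>L / C1))"
  have \<rho>s: "0 < \<rho>s" "\<rho>s \<le> \<rho>" "\<rho>s \<le> \<rho>L" "C1 * \<rho>s \<le> \<rho>L"
  proof -
    show "0 < \<rho>s" using \<rho> \<rho>L by (simp add: \<rho>s_def)
    show "\<rho>s \<le> \<rho>" "\<rho>s \<le> \<rho>L" by (simp_all add: \<rho>s_def)
    have "C1 * \<rho>s \<le> C1 * (\<rho>L / C1)" using \<rho> by (intro mult_left_mono) (auto simp: \<rho>s_def)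
    then show "C1 * \<rho>s \<le> \<rho>L" using \<rho> by simp
  qed
  define Kc where "Kc = 4 * cH * cP\<^sup>2 / cN"
  have Kc0: "0 < Kc" using cH_pos cP_ge cN(1) by (simp add: Kc_def)
  define \<delta> where "\<delta> = \<rho>s / (2 * (1 + Kc))"
  have \<delta>0: "0 < \<delta>" using \<rho>s Kc0 by (simp add: \<delta>_def)
  have \<delta>1: "\<delta> < \<rho>s"
  proof -
    have "\<rho>s / (2 * (1 + Kc)) < \<rho>s / 1" by (rule divide_strict_left_mono) (use \<rho>s Kc0 in auto)
    then show ?thesis by (simp add: \<delta>_def)
  qed
  have \<delta>2: "Kc * \<delta>\<^sup>2 < \<rho>s\<^sup>2"
  proof -
    have "Kc * \<delta>\<^sup>2 = \<rho>s\<^sup>2 * (Kc / (4 * (1 + Kc)\<^sup>2))" using Kc0 by (simp add: \<delta>_def power2_eq_square field_simps)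
    also have "\<dots> < \<rho>s\<^sup>2 * 1"
    proof (rule mult_strict_left_mono)
      have "Kc < 4 * (1 + Kc)\<^sup>2" using Kc0 by (simp add: power2_eq_square algebra_simps)
        (smt (verit) mult_pos_pos)
      then show "Kc / (4 * (1 + Kc)\<^sup>2) < 1" using Kc0 by simp
    qed (use \<rho>s in simp)
    finally show ?thesis by simp
  qed
  define a where "a = \<kappa>1 / 4"
  have a0: "0 < a" using \<kappa>1_pos by (simp add: a_def)
  define C where "C = sqrt Kc * \<delta> + 1"
  have C0: "0 < C" using Kc0 \<delta>0 by (simp add: C_def add_pos_nonneg)
  show ?thesis
  proof (rule exI[of _ \<delta>], rule conjI[OF \<delta>0], rule exI[of _ C], rule conjI[OF C0],
         rule exI[of _ a], rule conjI[OF a0], intro allI impI)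
    fix u0 \<tau> and u ut :: "nat \<Rightarrow> nat \<Rightarrow> real"
    assume A: "qn u0 = 1 \<and> nrm (\<lambda>j. u0 j - us j) \<le> \<delta> \<and> 0 < \<tau>
     \<and> (\<forall>j<M. u 0 j = u0 j)
     \<and> (\<forall>n. \<forall>j<M. (1/\<tau> + \<alpha>) * (u n j - ut (Suc n) j) + Kv (\<lambda>j. u n j - ut (Suc n) j) j
               = Av (u n) j - (h * ip (Av (u n)) (u n) / ((qn (u n)) powr (1/(p+1))) powr (p+1)) * (\<bar>u n j\<bar> powr (p-1) * u n j)
             \<and> u (Suc n) j = ut (Suc n) j / (qn (ut (Suc n))) powr (1 / (p + 1)))"
    have tau: "0 < \<tau>" using A by blast
    define s where "s = \<tau> / (1 + \<tau>)"
    have s01: "0 < s" "s \<le> 1" using tau by (auto simp: s_def)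
    define q where "q = 1 - \<kappa>1 / 2 * s"
    have q0: "0 \<le> q"
    proof -
      have "\<kappa>1 / 2 * s \<le> (1/2) / 2 * 1" using \<kappa>1_pos s01 by (intro mult_mono) auto
      then show ?thesis unfolding q_def by linarith
    qed
    define e where "e = (\<lambda>n j. u n j - us j)"
    have e0: "nrm (e 0) \<le> \<delta>"
    proof -
      have "nrm (e 0) = nrm (\<lambda>j. u0 j - us j)" unfolding e_def by (rule nrm_cong) (use A in auto)
      then show ?thesis using A by simp
    qed
    have qu0: "qn (u 0) = 1"
    proof -
      have "qn (u 0) = qn u0" by (rule qn_cong) (use A in auto)
      then show ?thesis using A by simp
    qed
    define N0 where "N0 = Nsq (u 0)"
    have N0b: "4 / cN * N0 \<le> Kc * \<delta>\<^sup>2"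
    proof -
      have "N0 \<le> cH * cP\<^sup>2 * (nrm (e 0))\<^sup>2" unfolding N0_def e_def by (rule Nsq_upper)
      also have "\<dots> \<le> cH * cP\<^sup>2 * \<delta>\<^sup>2" using e0 nrm_nonneg[of "e 0"] cH_pos
        by (intro mult_left_mono power_mono) auto
      finally have "4 / cN * N0 \<le> 4 / cN * (cH * cP\<^sup>2 * \<delta>\<^sup>2)" using cN(1) by (intro mult_left_mono) auto
      then show ?thesis by (simp add: Kc_def)
    qed
    have inv: "qn (u n) = 1 \<and> nrm (e n) < \<rho>s \<and> Nsq (u n) \<le> q ^ n * N0" for n
    proof (induction n)
      case 0
      show ?case using qu0 e0 \<delta>1 by (simp add: N0_def)
    next
      case (Suc n)
      have IH: "qn (u n) = 1" "nrm (e n) < \<rho>s" "Nsq (u n) \<le> q ^ n * N0" using Suc by auto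
      have S: "qn (u (Suc n)) = 1 \<and> Nsq (u (Suc n)) \<le> (1 - \<kappa>1 / 2 * (\<tau> / (1 + \<tau>))) * Nsq (u n)
          \<and> nrm (\<lambda>j. u (Suc n) j - us j) \<le> C1 * nrm (\<lambda>j. u n j - us j)"
      proof (rule st[OF tau IH(1), of "\<lambda>j. u n j - ut (Suc n) j"])
        show "nrm (\<lambda>j. u n j - us j) < \<rho>" using IH(2) \<rho>s by (simp add: e_def)
        show "\<forall>j<M. (1/\<tau> + \<alpha>) * (u n j - ut (Suc n) j) + Kv (\<lambda>j. u n j - ut (Suc n) j) j = G (u n) j"
          using A IH(1) by (simp add: G_def lt_def)
        show "\<forall>j<M. u (Suc n) j = (u n j - (u n j - ut (Suc n) j)) / (qn (\<lambda>j. u n j - (u n j - ut (Suc n) j))) powr (1 / (p + 1))"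
          using A by simp
      qed
      have Nn: "Nsq (u (Suc n)) \<le> q ^ Suc n * N0"
      proof -
        have "Nsq (u (Suc n)) \<le> q * Nsq (u n)" using S by (simp add: q_def s_def)
        also have "\<dots> \<le> q * (q ^ n * N0)" using IH(3) q0 by (rule mult_left_mono)
        finally show ?thesis by simp
      qed
      have en: "nrm (e (Suc n)) < \<rho>L"
      proof -
        have "nrm (e (Suc n)) \<le> C1 * nrm (e n)" using S by (simp add: e_def)
        also have "\<dots> < C1 * \<rho>s" using IH(2) \<rho> by simp
        finally show ?thesis using \<rho>s by linarith
      qed
      have "cN / 4 * (nrm (e (Suc n)))\<^sup>2 \<le> Nsq (u (Suc n))" using lo[of "u (Suc n)"] S en by (simp add: e_def)
      also have "\<dots> \<le> q ^ Suc n * N0" by (rule Nn)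
      also have "\<dots> \<le> 1 * N0"
      proof (rule mult_right_mono)
        have "q \<le> 1" using \<kappa>1_pos s01 by (simp add: q_def)
        then show "q ^ Suc n \<le> 1" using power_le_one[OF q0] by blast
        show "0 \<le> N0" by (simp add: N0_def Nsq_nonneg)
      qed
      finally have "(nrm (e (Suc n)))\<^sup>2 \<le> 4 / cN * N0" using cN(1) by (simp add: field_simps)
      also have "\<dots> < \<rho>s\<^sup>2" using N0b \<delta>2 by linarith
      finally have "nrm (e (Suc n)) < \<rho>s" using \<rho>s(1) by (simp add: power_less_imp_less_base)
      then show ?case using S Nn by simp
    qed
    show "nrm (\<lambda>j. u n j - us j) \<le> C * exp (- (a * (\<tau> / (1 + \<tau>)) * real n))" for n
    proof -
      have I: "qn (u n) = 1" "nrm (e n) < \<rho>s" "Nsq (u n) \<le> q ^ n * N0" using inv[of n] by auto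
      have qe: "q ^ n \<le> exp (- (\<kappa>1 / 2 * s) * real n)"
      proof -
        have "q \<le> exp (- (\<kappa>1 / 2 * s))" using exp_ge_add_one_self[of "- (\<kappa>1 / 2 * s)"] by (simp add: q_def)
        then have "q ^ n \<le> (exp (- (\<kappa>1 / 2 * s))) ^ n" using q0 by (rule power_mono)
        also have "\<dots> = exp (- (\<kappa>1 / 2 * s) * real n)" by (simp add: exp_of_nat_mult[symmetric] mult.commute)
        finally show ?thesis .
      qed
      define E where "E = exp (- (a * s * real n))"
      have E0: "0 \<le> E" by (simp add: E_def)
      have EE: "exp (- (\<kappa>1 / 2 * s) * real n) = E * E"
      proof -
        have ee: "- (\<kappa>1 / 2 * s) * real n = (- (a * s * real n)) + (- (a * s * real n))"
          by (simp add: a_def algebra_simps)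
        show ?thesis unfolding ee E_def by (rule exp_add)
      qed
      have "cN / 4 * (nrm (e n))\<^sup>2 \<le> Nsq (u n)" using lo[OF I(1)] I(2) \<rho>s by (simp add: e_def)
      also have "\<dots> \<le> q ^ n * N0" by (rule I(3))
      also have "\<dots> \<le> (E * E) * N0" unfolding EE[symmetric] using qe by (rule mult_right_mono) (simp add: N0_def Nsq_nonneg)
      finally have f1: "cN / 4 * (nrm (e n))\<^sup>2 \<le> (E * E) * N0" .
      have "(nrm (e n))\<^sup>2 = (4 / cN) * (cN / 4 * (nrm (e n))\<^sup>2)" using cN(1) by simp
      also have "\<dots> \<le> (4 / cN) * ((E * E) * N0)" using f1 cN(1) by (intro mult_left_mono) auto
      also have "\<dots> = (E * E) * (4 / cN * N0)" by (simp only: mult_ac)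
      also have "\<dots> \<le> (E * E) * (Kc * \<delta>\<^sup>2)" by (rule mult_left_mono[OF N0b]) (simp add: E0)
      also have "\<dots> = (sqrt Kc * \<delta> * E)\<^sup>2" using Kc0 by (simp add: power_mult_distrib power2_eq_square)
      finally have f2: "(nrm (e n))\<^sup>2 \<le> (sqrt Kc * \<delta> * E)\<^sup>2" .
      have "nrm (e n) \<le> sqrt Kc * \<delta> * E" by (rule power2_le_imp_le[OF f2]) (use Kc0 \<delta>0 E0 in simp)
      also have "\<dots> \<le> C * E" by (rule mult_right_mono[OF _ E0]) (simp add: C_def)
      finally show ?thesis by (simp add: e_def s_def E_def)
    qed
  qed
qed

end


lemma exp_vd:
  fixes a b :: real
  shows "((\<lambda>y. exp (\<i> * of_real (a * (y - b)))) has_vector_derivative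
           (\<i> * of_real a) * exp (\<i> * of_real (a * (y - b)))) (at y)"
proof -
  have 1: "((\<lambda>y. \<i> * of_real (a * (y - b))) has_vector_derivative \<i> * of_real a) (at y)"
    by (auto intro!: derivative_eq_intros)
  have "((exp \<circ> (\<lambda>y. \<i> * of_real (a * (y - b)))) has_vector_derivative
           (\<i> * of_real a) * exp (\<i> * of_real (a * (y - b)))) (at y)"
    by (rule field_vector_diff_chain_at[OF 1]) (auto intro!: derivative_eq_intros)
  then show ?thesis by (simp add: o_def)
qed

lemma phi_vd:
  "(phi x0 L M l has_vector_derivative
     (1 / of_nat M) * (\<Sum>k\<in>{-(int M div 2)..int M div 2}.
        of_real (1 / acoef M k) * ((\<i> * of_real (real_of_int k * sigma L)) * exp (\<i> * of_real (real_of_int k * sigma L * (y - xgrid x0 L M l)))))) (at y)"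
  unfolding phi_def
  by (intro has_vector_derivative_mult_right has_vector_derivative_sum exp_vd)

lemma phi_vd2:
  "((\<lambda>y. vector_derivative (phi x0 L M l) (at y)) has_vector_derivative
     (1 / of_nat M) * (\<Sum>k\<in>{-(int M div 2)..int M div 2}.
        of_real (1 / acoef M k) * ((\<i> * of_real (real_of_int k * sigma L)) * ((\<i> * of_real (real_of_int k * sigma L)) * exp (\<i> * of_real (real_of_int k * sigma L * (y - xgrid x0 L M l))))))) (at y)"
proof -
  have e: "(\<lambda>y. vector_derivative (phi x0 L M l) (at y)) = (\<lambda>y. (1 / of_nat M) * (\<Sum>k\<in>{-(int M div 2)..int M div 2}.
        of_real (1 / acoef M k) * ((\<i> * of_real (real_of_int k * sigma L)) * exp (\<i> * of_real (real_of_int k * sigma L * (y - xgrid x0 L M l))))))"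
    by (rule ext, rule vector_derivative_at[OF phi_vd])
  show ?thesis unfolding e
    by (intro has_vector_derivative_mult_right has_vector_derivative_sum exp_vd)
qed

lemma Dxx_formula:
  "Dxx x0 L M j l = - (1 / real M) * (\<Sum>k\<in>{-(int M div 2)..int M div 2}.
      (1 / acoef M k) * (real_of_int k * sigma L)\<^sup>2 * cos (real_of_int k * sigma L * (xgrid x0 L M j - xgrid x0 L M l)))"
proof -
  have "Dxx x0 L M j l = Re ((1 / of_nat M) * (\<Sum>k\<in>{-(int M div 2)..int M div 2}.
        of_real (1 / acoef M k) * ((\<i> * of_real (real_of_int k * sigma L)) * ((\<i> * of_real (real_of_int k * sigma L)) * exp (\<i> * of_real (real_of_int k * sigma L * (xgrid x0 L M j - xgrid x0 L M l)))))))"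
    unfolding Dxx_def by (subst vector_derivative_at[OF phi_vd2]) rule
  also have "\<dots> = - (1 / real M) * (\<Sum>k\<in>{-(int M div 2)..int M div 2}.
      (1 / acoef M k) * (real_of_int k * sigma L)\<^sup>2 * cos (real_of_int k * sigma L * (xgrid x0 L M j - xgrid x0 L M l)))"
    by (simp add: Re_sum sum_negf power2_eq_square Re_exp cos_of_real algebra_simps flip: sum_distrib_left)
  finally show ?thesis .
qed

lemma cos_swap: "cos (c * (a - b)) = cos (c * (b - (a::real)))"
  by (metis cos_minus minus_diff_eq mult_minus_right)

lemma Dxx_sym: "Dxx x0 L M j l = Dxx x0 L M l j"
  unfolding Dxx_formula by (simp add: cos_swap)

lemma acoef_pos: "0 < acoef M k" by (simp add: acoef_def)

lemma double_sum_cos: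
  fixes u :: "nat \<Rightarrow> real" and x :: "nat \<Rightarrow> real"
  shows "(\<Sum>j<M. \<Sum>l<M. u j * u l * cos (t * (x j - x l)))
       = (\<Sum>j<M. u j * cos (t * x j))\<^sup>2 + (\<Sum>j<M. u j * sin (t * x j))\<^sup>2"
proof -
  have "(\<Sum>j<M. \<Sum>l<M. u j * u l * cos (t * (x j - x l)))
      = (\<Sum>j<M. \<Sum>l<M. (u j * cos (t * x j)) * (u l * cos (t * x l)) + (u j * sin (t * x j)) * (u l * sin (t * x l)))"
    by (intro sum.cong refl) (simp add: right_diff_distrib cos_diff algebra_simps)
  also have "\<dots> = (\<Sum>j<M. u j * cos (t * x j)) * (\<Sum>l<M. u l * cos (t * x l)) + (\<Sum>j<M. u j * sin (t * x j)) * (\<Sum>l<M. u l * sin (t * x l))"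
    by (simp add: sum.distrib sum_product)
  finally show ?thesis by (simp add: power2_eq_square)
qed

lemma Dxx_psd:
  fixes u :: "nat \<Rightarrow> real"
  shows "0 \<le> (\<Sum>j<M. u j * (\<Sum>l<M. (- Dxx x0 L M j l / 2) * u l))"
proof -
  define I where "I = {-(int M div 2)..int M div 2}"
  define c where "c = (\<lambda>k. (1 / acoef M k) * (real_of_int k * sigma L)\<^sup>2)"
  define x where "x = xgrid x0 L M"
  have c0: "0 \<le> c k" for k
  proof -
    have "0 < acoef M k" by (rule acoef_pos)
    then show ?thesis by (simp add: c_def divide_nonneg_pos)
  qed
  have D: "- Dxx x0 L M j l / 2 = (1 / (2 * real M)) * (\<Sum>k\<in>I. c k * cos (real_of_int k * sigma L * (x j - x l)))" for j l
    unfolding Dxx_formula I_def c_def x_def by (simp add: algebra_simps)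
  have "(\<Sum>j<M. u j * (\<Sum>l<M. (- Dxx x0 L M j l / 2) * u l))
     = (\<Sum>j<M. \<Sum>l<M. \<Sum>k\<in>I. (1 / (2 * real M)) * c k * (u j * u l * cos (real_of_int k * sigma L * (x j - x l))))"
    unfolding D by (simp add: sum_distrib_left sum_distrib_right algebra_simps)
  also have "\<dots> = (\<Sum>j<M. \<Sum>k\<in>I. \<Sum>l<M. (1 / (2 * real M)) * c k * (u j * u l * cos (real_of_int k * sigma L * (x j - x l))))"
    by (intro sum.cong refl sum.swap)
  also have "\<dots> = (\<Sum>k\<in>I. \<Sum>j<M. \<Sum>l<M. (1 / (2 * real M)) * c k * (u j * u l * cos (real_of_int k * sigma L * (x j - x l))))"
    by (rule sum.swap)
  also have "\<dots> = (\<Sum>k\<in>I. (1 / (2 * real M)) * c k * (\<Sum>j<M. \<Sum>l<M. u j * u l * cos (real_of_int k * sigma L * (x j - x l))))"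
    by (simp add: sum_distrib_left)
  also have "\<dots> = (\<Sum>k\<in>I. (1 / (2 * real M)) * c k * ((\<Sum>j<M. u j * cos (real_of_int k * sigma L * x j))\<^sup>2 + (\<Sum>j<M. u j * sin (real_of_int k * sigma L * x j))\<^sup>2))"
    by (simp only: double_sum_cos)
  also have "0 \<le> \<dots>" using c0 by (intro sum_nonneg mult_nonneg_nonneg) auto
  finally show ?thesis by simp
qed


lemma powr_eq_one_base:
  fixes x r :: real
  assumes "0 \<le> x" "r \<noteq> 0" "x powr r = 1"
  shows "x = 1"
proof (cases "x = 0")
  case True then show ?thesis using assms by simp
next
  case False
  have "(x powr r) powr (1/r) = x powr (r * (1/r))" by (rule powr_powr)
  also have "\<dots> = x" using assms False by simp
  finally show ?thesis using assms by simp
qed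

lemma inner_h_eq: "inner_h L M u v = hstep L M * (\<Sum>j<M. u j * v j)"
  by (simp add: inner_h_def)

lemma Dxx_app_eq: "Dxx_app x0 L M v j = -2 * (\<Sum>l<M. (- Dxx x0 L M j l / 2) * v l)"
  by (simp add: Dxx_app_def sum_distrib_left algebra_simps)

lemma semi_sq:
  assumes "0 < hstep L M"
  shows "(semi1_h x0 L M v)\<^sup>2 = hstep L M * (2 * (\<Sum>j<M. v j * (\<Sum>l<M. (- Dxx x0 L M j l / 2) * v l)))"
proof -
  have "inner_h L M (\<lambda>j. - Dxx_app x0 L M v j) v = hstep L M * (2 * (\<Sum>j<M. v j * (\<Sum>l<M. (- Dxx x0 L M j l / 2) * v l)))"
    unfolding inner_h_eq Dxx_app_eq by (simp add: sum_distrib_left sum_negf algebra_simps)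
  moreover have "0 \<le> hstep L M * (2 * (\<Sum>j<M. v j * (\<Sum>l<M. (- Dxx x0 L M j l / 2) * v l)))"
    using assms Dxx_psd[where u=v and M=M and L=L] by simp
  ultimately show ?thesis by (simp add: semi1_h_def)
qed

lemma norm_h_sq: "0 < hstep L M \<Longrightarrow> (norm_h L M v)\<^sup>2 = hstep L M * (\<Sum>j<M. v j * v j)"
  by (simp add: norm_h_def inner_h_eq sum_nonneg)

lemma Q_h_eq:
  assumes "0 < hstep L M"
  shows "Q_h x0 L M V \<omega> v = hstep L M * (\<Sum>j<M. ((\<Sum>l<M. (- Dxx x0 L M j l / 2) * v l) + (V (xgrid x0 L M j) + \<omega>) * v j) * v j)"
  unfolding Q_h_def semi_sq[OF assms] norm_h_sq[OF assms]
  by (simp add: sum.distrib sum_distrib_left algebra_simps power2_eq_square)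

lemma normq_eq: "normq_h L M (p + 1) v = (hstep L M * (\<Sum>j<M. \<bar>v j\<bar> powr (p + 1))) powr (1 / (p + 1))"
  by (simp add: normq_h_def)


theorem mainTheorem17:
  fixes x0 L :: real and M :: nat and V :: "real \<Rightarrow> real"
    and \<omega> p \<alpha> lam :: real and us :: "nat \<Rightarrow> real"
  assumes L_pos: "L > 0" and M_pos: "M > 0" and M_even: "even M"
    and A1_p: "1 < p"
    and A1_V_nonneg: "\<forall>x\<in>{x0..x0+L}. V x \<ge> 0"
    and A1_V_bdd: "\<exists>B. \<forall>x\<in>{x0..x0+L}. \<bar>V x\<bar> \<le> B"
    and A2': "\<omega> > - lam0' x0 L M V"
    and alpha: "\<alpha> \<ge> 1/2 * max 0 (Max ((\<lambda>j. V (xgrid x0 L M j) + \<omega>) ` {..<M})) + 1/2"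
    and gs: "discrete_ground_state x0 L M V \<omega> p us lam"
    and nd: "NDh x0 L M V \<omega> p us lam"
  shows "\<exists>\<delta>0>0. \<forall>u0 \<in> U_h x0 L M \<delta>0 us \<inter> S_h L M p.
           \<exists>C>0. \<exists>a>0. \<forall>\<tau>>0. \<forall>u ut.
             (\<forall>j<M. u 0 j = u0 j) \<and> GFALM_iter x0 L M V \<omega> p \<alpha> \<tau> u ut \<longrightarrow>
             (\<forall>n. norm1_h x0 L M (\<lambda>j. u n j - us j) \<le> C * exp (- a * real n * \<tau> / (1 + \<tau>)))"
proof -
  define h where "h = hstep L M"
  define Km where "Km = (\<lambda>j l. - Dxx x0 L M j l / 2)"
  define Vw where "Vw = (\<lambda>j. V (xgrid x0 L M j) + \<omega>)"
  have h_pos: "0 < h" using L_pos M_pos by (simp add: h_def hstep_def)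
  have hs: "0 < hstep L M" using h_pos by (simp add: h_def)
  have grid: "xgrid x0 L M j \<in> {x0..x0+L}" if "j < M" for j
  proof -
    have "real j * (L / real M) \<le> real M * (L / real M)" using that L_pos by (intro mult_right_mono) auto
    then show ?thesis using L_pos M_pos by (simp add: xgrid_def hstep_def)
  qed
  have Vnn: "0 \<le> V (xgrid x0 L M j)" if "j < M" for j using A1_V_nonneg grid[OF that] by blast
  have us_norm: "h * (\<Sum>j<M. \<bar>us j\<bar> powr (p+1)) = 1"
  proof -
    have "normq_h L M (p + 1) us = 1" using gs by (simp add: discrete_ground_state_def S_h_def)
    then show ?thesis unfolding normq_eq h_def[symmetric]
      by (rule powr_eq_one_base[rotated 2]) (use h_pos A1_p in \<open>auto intro!: sum_nonneg mult_nonneg_nonneg\<close>)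
  qed
  have EL: "(\<Sum>l<M. Km j l * us l) + Vw j * us j = lam * (\<bar>us j\<bar> powr (p-1) * us j)" if j: "j < M" for j
  proof -
    have "A_h x0 L M V \<omega> us j = lam * \<bar>us j\<bar> powr (p - 1) * us j" using gs j by (simp add: discrete_ground_state_def)
    then show ?thesis unfolding A_h_def Dxx_app_eq Km_def Vw_def by (simp add: algebra_simps)
  qed
  have alpha_ge: "1 \<le> 2 * \<alpha> - Vw j" if j: "j < M" for j
  proof -
    have "Vw j \<le> Max ((\<lambda>j. V (xgrid x0 L M j) + \<omega>) ` {..<M})" using j by (intro Max_ge) (auto simp: Vw_def)
    then show ?thesis using alpha by linarith
  qed
  have alpha_half: "1/2 \<le> \<alpha>" using alpha by linarith
  have lam_nn: "0 \<le> lam"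
  proof -
    define S2 where "S2 = (\<Sum>j<M. us j * us j)"
    have S2pos: "0 < S2"
    proof -
      have "\<exists>j<M. us j \<noteq> 0"
      proof (rule ccontr)
        assume "\<not> (\<exists>j<M. us j \<noteq> 0)"
        then have "(\<Sum>j<M. \<bar>us j\<bar> powr (p+1)) = 0" by simp
        then show False using us_norm by simp
      qed
      then obtain j where j: "j < M" "us j \<noteq> 0" by blast
      have "us j * us j \<le> S2" unfolding S2_def using j by (intro member_le_sum) auto
      moreover have "0 < us j * us j" using j(2) not_real_square_gt_zero by blast
      ultimately show ?thesis by linarith
    qed
    define m where "m = sqrt (h * S2)"
    have m_pos: "0 < m" using h_pos S2pos by (simp add: m_def)
    define v where "v = (\<lambda>j. us j / m)"
    have nv: "norm_h L M v = 1"
    proof -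
      have "(norm_h L M v)\<^sup>2 = h * S2 / m\<^sup>2" unfolding norm_h_sq[OF hs] h_def[symmetric]
        by (simp add: v_def S2_def sum_divide_distrib[symmetric] power2_eq_square)
      also have "\<dots> = 1" using m_pos h_pos S2pos by (simp add: m_def)
      finally have sq: "(norm_h L M v)\<^sup>2 = 1" .
      have "0 \<le> norm_h L M v" using hs by (simp add: norm_h_def inner_h_eq sum_nonneg)
      then show ?thesis using sq power2_eq_1_iff[of "norm_h L M v"] by auto
    qed
    define E where "E = 1/2 * (semi1_h x0 L M v)\<^sup>2 + hstep L M * (\<Sum>j<M. V (xgrid x0 L M j) * \<bar>v j\<bar>\<^sup>2)"
    have "lam0' x0 L M V \<le> E"
      unfolding lam0'_def
    proof (rule cInf_lower)
      show "E \<in> {1/2 * (semi1_h x0 L M u)\<^sup>2 + hstep L M * (\<Sum>j<M. V (xgrid x0 L M j) * \<bar>u j\<bar>\<^sup>2) | u. norm_h L M u = 1}"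
        using nv by (auto simp: E_def)
      show "bdd_below {1/2 * (semi1_h x0 L M u)\<^sup>2 + hstep L M * (\<Sum>j<M. V (xgrid x0 L M j) * \<bar>u j\<bar>\<^sup>2) | u. norm_h L M u = 1}"
      proof (rule bdd_belowI[of _ 0])
        fix x assume "x \<in> {1/2 * (semi1_h x0 L M u)\<^sup>2 + hstep L M * (\<Sum>j<M. V (xgrid x0 L M j) * \<bar>u j\<bar>\<^sup>2) | u. norm_h L M u = 1}"
        then obtain u where x: "x = 1/2 * (semi1_h x0 L M u)\<^sup>2 + hstep L M * (\<Sum>j<M. V (xgrid x0 L M j) * \<bar>u j\<bar>\<^sup>2)" by blast
        have "0 \<le> (\<Sum>j<M. V (xgrid x0 L M j) * \<bar>u j\<bar>\<^sup>2)" using Vnn by (intro sum_nonneg) auto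
        then show "0 \<le> x" unfolding x using hs by simp
      qed
    qed
    then have Epos: "0 < E + \<omega>" using A2' by linarith
    have "E + \<omega> = Q_h x0 L M V \<omega> v"
    proof -
      have "\<omega> = \<omega> * (norm_h L M v)\<^sup>2" using nv by simp
      then show ?thesis by (simp add: E_def Q_h_def)
    qed
    also have "\<dots> = h * (\<Sum>j<M. ((\<Sum>l<M. Km j l * v l) + Vw j * v j) * v j)"
      unfolding Q_h_eq[OF hs] by (simp add: h_def Km_def Vw_def)
    also have "\<dots> = h / m\<^sup>2 * (\<Sum>j<M. ((\<Sum>l<M. Km j l * us l) + Vw j * us j) * us j)"
      by (simp add: v_def sum_divide_distrib sum_distrib_left power2_eq_square algebra_simps)
    also have "\<dots> = h / m\<^sup>2 * (\<Sum>j<M. lam * \<bar>us j\<bar> powr (p+1))"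
      by (intro arg_cong[where f="\<lambda>x. h / m\<^sup>2 * x"] sum.cong refl) (simp add: EL g_times)
    also have "\<dots> = lam / m\<^sup>2"
      using us_norm h_pos by (simp add: sum_distrib_left[symmetric] field_simps)
    finally have "0 < lam / m\<^sup>2" using Epos by simp
    then show ?thesis using m_pos by (simp add: zero_less_divide_iff)
  qed
  have ND: "\<exists>c>0. \<forall>\<xi>. (\<Sum>j<M. (\<bar>us j\<bar> powr (p-1) * us j) * \<xi> j) = 0 \<longrightarrow>
               c * (\<Sum>j<M. \<xi> j * \<xi> j) \<le> (\<Sum>j<M. ((\<Sum>l<M. Km j l * \<xi> l) + Vw j * \<xi> j - p * lam * \<bar>us j\<bar> powr (p-1) * \<xi> j) * \<xi> j)"
  proof -
    obtain c where c: "c > 0" "\<forall>\<xi>\<in>tangent_h L M p us.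
      inner_h L M (A_h x0 L M V \<omega> \<xi>) \<xi> - p * lam * inner_h L M (\<lambda>j. \<bar>us j\<bar> powr (p - 1) * \<xi> j) \<xi>
      \<ge> c * (norm1_h x0 L M \<xi>)\<^sup>2" using nd by (auto simp: NDh_def)
    show ?thesis
    proof (intro exI[of _ c] conjI allI impI)
      show "0 < c" by (rule c(1))
      fix \<xi> :: "nat \<Rightarrow> real"
      assume t: "(\<Sum>j<M. (\<bar>us j\<bar> powr (p-1) * us j) * \<xi> j) = 0"
      then have "\<xi> \<in> tangent_h L M p us" by (simp add: tangent_h_def inner_h_eq)
      then have ineq: "c * (norm1_h x0 L M \<xi>)\<^sup>2 \<le> inner_h L M (A_h x0 L M V \<omega> \<xi>) \<xi> - p * lam * inner_h L M (\<lambda>j. \<bar>us j\<bar> powr (p - 1) * \<xi> j) \<xi>"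
        using c(2) by blast
      have rhs: "inner_h L M (A_h x0 L M V \<omega> \<xi>) \<xi> - p * lam * inner_h L M (\<lambda>j. \<bar>us j\<bar> powr (p - 1) * \<xi> j) \<xi>
          = h * (\<Sum>j<M. ((\<Sum>l<M. Km j l * \<xi> l) + Vw j * \<xi> j - p * lam * \<bar>us j\<bar> powr (p-1) * \<xi> j) * \<xi> j)"
        unfolding inner_h_eq A_h_def Dxx_app_eq
        by (simp add: h_def Km_def Vw_def sum_distrib_left sum_subtractf algebra_simps)
      have lhs: "h * (\<Sum>j<M. \<xi> j * \<xi> j) \<le> (norm1_h x0 L M \<xi>)\<^sup>2"
      proof -
        have "(norm1_h x0 L M \<xi>)\<^sup>2 = (norm_h L M \<xi>)\<^sup>2 + (semi1_h x0 L M \<xi>)\<^sup>2"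
          by (simp add: norm1_h_def)
        then show ?thesis using norm_h_sq[OF hs, of \<xi>] by (simp add: h_def)
      qed
      have "c * (h * (\<Sum>j<M. \<xi> j * \<xi> j)) \<le> h * (\<Sum>j<M. ((\<Sum>l<M. Km j l * \<xi> l) + Vw j * \<xi> j - p * lam * \<bar>us j\<bar> powr (p-1) * \<xi> j) * \<xi> j)"
        using mult_left_mono[OF lhs less_imp_le[OF c(1)]] ineq rhs by linarith
      then show "c * (\<Sum>j<M. \<xi> j * \<xi> j) \<le> (\<Sum>j<M. ((\<Sum>l<M. Km j l * \<xi> l) + Vw j * \<xi> j - p * lam * \<bar>us j\<bar> powr (p-1) * \<xi> j) * \<xi> j)"
        using h_pos by (simp add: mult.left_commute)
    qed
  qed
  interpret G: gsl M h Km Vw p lam \<alpha> us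
  proof
    show "0 < M" by (rule M_pos)
    show "0 < h" by (rule h_pos)
    show "\<And>j l. j < M \<Longrightarrow> l < M \<Longrightarrow> Km j l = Km l j" by (simp add: Km_def Dxx_sym)
    show "\<And>u. 0 \<le> (\<Sum>j<M. u j * (\<Sum>l<M. Km j l * u l))" unfolding Km_def by (rule Dxx_psd)
  qed (use A1_p lam_nn alpha_ge alpha_half us_norm EL ND in auto)
  obtain \<delta> C a where \<delta>: "\<delta> > 0" and C0: "C > 0" and a0: "a > 0" and
    conv: "\<And>u0 \<tau> u ut. G.qn u0 = 1 \<and> G.nrm (\<lambda>j. u0 j - us j) \<le> \<delta> \<and> 0 < \<tau>
     \<and> (\<forall>j<M. u 0 j = u0 j)
     \<and> (\<forall>n. \<forall>j<M. (1/\<tau> + \<alpha>) * (u n j - ut (Suc n) j) + G.Kv (\<lambda>j. u n j - ut (Suc n) j) j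
               = G.Av (u n) j - (h * G.ip (G.Av (u n)) (u n) / ((G.qn (u n)) powr (1/(p+1))) powr (p+1)) * (\<bar>u n j\<bar> powr (p-1) * u n j)
             \<and> u (Suc n) j = ut (Suc n) j / (G.qn (ut (Suc n))) powr (1 / (p + 1)))
     \<Longrightarrow> (\<forall>n. G.nrm (\<lambda>j. u n j - us j) \<le> C * exp (- (a * (\<tau> / (1 + \<tau>)) * real n)))"
    using G.converge by blast
  have qn_eq: "normq_h L M (p + 1) v = (G.qn v) powr (1 / (p + 1))" for v
    unfolding G.qn_def by (simp add: normq_eq h_def)
  have normh_eq: "norm_h L M v = sqrt h * G.nrm v" for v
    unfolding G.nrm_def by (simp add: norm_h_def inner_h_eq L2_set_def h_def real_sqrt_mult power2_eq_square)
  have semi_eq: "(semi1_h x0 L M v)\<^sup>2 = h * (2 * G.ip (G.Kv v) v)" for v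
    unfolding semi_sq[OF hs] G.ip_def G.Kv_def by (simp add: h_def Km_def mult.commute)
  have norm1_lo: "sqrt h * G.nrm v \<le> norm1_h x0 L M v" for v
  proof -
    have "norm_h L M v \<le> sqrt ((norm_h L M v)\<^sup>2 + (semi1_h x0 L M v)\<^sup>2)"
      by (rule real_le_rsqrt) simp
    then show ?thesis by (simp add: norm1_h_def normh_eq)
  qed
  have norm1_hi: "norm1_h x0 L M v \<le> sqrt (h * (1 + 2 * G.sK)) * G.nrm v" for v
  proof -
    have k: "G.ip (G.Kv v) v \<le> G.sK * (G.nrm v)\<^sup>2"
    proof -
      have "G.ip (G.Kv v) v \<le> G.nrm (G.Kv v) * G.nrm v" using G.CS[of "G.Kv v" v] by linarith
      also have "\<dots> \<le> G.sK * G.nrm v * G.nrm v" using G.Kv_bound[of v] G.nrm_nonneg[of v] by (rule mult_right_mono)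
      finally show ?thesis by (simp add: power2_eq_square)
    qed
    have "(norm1_h x0 L M v)\<^sup>2 = h * (G.nrm v)\<^sup>2 + h * (2 * G.ip (G.Kv v) v)"
    proof -
      have nn: "0 \<le> (norm_h L M v)\<^sup>2 + (semi1_h x0 L M v)\<^sup>2" by simp
      show ?thesis unfolding norm1_h_def real_sqrt_pow2[OF nn] semi_eq normh_eq
        using h_pos G.Kv_psd[of v] by (simp add: power_mult_distrib)
    qed
    also have "\<dots> \<le> h * (G.nrm v)\<^sup>2 + h * (2 * (G.sK * (G.nrm v)\<^sup>2))"
      using k h_pos by (intro add_left_mono mult_left_mono) auto
    also have "\<dots> = (sqrt (h * (1 + 2 * G.sK)) * G.nrm v)\<^sup>2"
      using h_pos G.sK_nonneg by (simp add: power_mult_distrib algebra_simps)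
    finally have "(norm1_h x0 L M v)\<^sup>2 \<le> (sqrt (h * (1 + 2 * G.sK)) * G.nrm v)\<^sup>2" .
    then show ?thesis by (rule power2_le_imp_le) (use G.nrm_nonneg h_pos G.sK_nonneg in simp)
  qed
  define C' where "C' = sqrt (h * (1 + 2 * G.sK)) * C + 1"
  have C'0: "0 < C'"
  proof -
    have "0 \<le> sqrt (h * (1 + 2 * G.sK)) * C" using h_pos G.sK_nonneg C0 by simp
    then show ?thesis by (simp add: C'_def)
  qed
  show ?thesis
  proof (rule exI[of _ "\<delta> * sqrt h"], rule conjI)
    show "0 < \<delta> * sqrt h" using \<delta> h_pos by simp
    show "\<forall>u0 \<in> U_h x0 L M (\<delta> * sqrt h) us \<inter> S_h L M p.
           \<exists>C>0. \<exists>a>0. \<forall>\<tau>>0. \<forall>u ut.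
             (\<forall>j<M. u 0 j = u0 j) \<and> GFALM_iter x0 L M V \<omega> p \<alpha> \<tau> u ut \<longrightarrow>
             (\<forall>n. norm1_h x0 L M (\<lambda>j. u n j - us j) \<le> C * exp (- a * real n * \<tau> / (1 + \<tau>)))"
    proof
      fix u0 assume u0: "u0 \<in> U_h x0 L M (\<delta> * sqrt h) us \<inter> S_h L M p"
      have qu0: "G.qn u0 = 1"
      proof -
        have "normq_h L M (p + 1) u0 = 1" using u0 by (simp add: S_h_def)
        then have "(G.qn u0) powr (1 / (p + 1)) = 1" by (simp add: qn_eq)
        then show ?thesis
          by (rule powr_eq_one_base[rotated 2]) (use h_pos A1_p in \<open>auto simp: G.qn_def intro!: sum_nonneg mult_nonneg_nonneg\<close>)
      qed
      have nu0: "G.nrm (\<lambda>j. u0 j - us j) \<le> \<delta>"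
      proof -
        have "sqrt h * G.nrm (\<lambda>j. u0 j - us j) \<le> \<delta> * sqrt h"
          using norm1_lo[of "\<lambda>j. u0 j - us j"] u0 by (simp add: U_h_def)
        then show ?thesis using h_pos by (simp add: mult.commute)
      qed
      show "\<exists>C>0. \<exists>a>0. \<forall>\<tau>>0. \<forall>u ut.
             (\<forall>j<M. u 0 j = u0 j) \<and> GFALM_iter x0 L M V \<omega> p \<alpha> \<tau> u ut \<longrightarrow>
             (\<forall>n. norm1_h x0 L M (\<lambda>j. u n j - us j) \<le> C * exp (- a * real n * \<tau> / (1 + \<tau>)))"
      proof (rule exI[of _ C'], rule conjI[OF C'0], rule exI[of _ a], rule conjI[OF a0], intro allI impI)
        fix \<tau> u ut n
        assume tau: "0 < \<tau>" and H: "(\<forall>j<M. u 0 j = u0 j) \<and> GFALM_iter x0 L M V \<omega> p \<alpha> \<tau> u ut"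
        have rec: "\<forall>n. \<forall>j<M. (1/\<tau> + \<alpha>) * (u n j - ut (Suc n) j) + G.Kv (\<lambda>j. u n j - ut (Suc n) j) j
               = G.Av (u n) j - (h * G.ip (G.Av (u n)) (u n) / ((G.qn (u n)) powr (1/(p+1))) powr (p+1)) * (\<bar>u n j\<bar> powr (p-1) * u n j)
             \<and> u (Suc n) j = ut (Suc n) j / (G.qn (ut (Suc n))) powr (1 / (p + 1))"
        proof (intro allI impI conjI)
          fix m j assume j: "j < M"
          have g: "(ut (Suc m) j - u m j) / \<tau> =
            - ( - 1/2 * Dxx_app x0 L M (ut (Suc m)) j
              + (V (xgrid x0 L M j) + \<omega> - lam_tilde x0 L M V \<omega> p (u m) * \<bar>u m j\<bar> powr (p - 1)) * u m j
              + \<alpha> * (ut (Suc m) j - u m j))"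
            and g2: "u (Suc m) j = ut (Suc m) j / normq_h L M (p + 1) (ut (Suc m))"
            using H j by (auto simp: GFALM_iter_def)
          have lt: "lam_tilde x0 L M V \<omega> p (u m) = h * G.ip (G.Av (u m)) (u m) / ((G.qn (u m)) powr (1/(p+1))) powr (p+1)"
            unfolding lam_tilde_def Q_h_eq[OF hs] qn_eq G.ip_def G.Av_def G.Kv_def
            by (simp add: h_def Km_def Vw_def)
          have D: "- 1/2 * Dxx_app x0 L M (ut (Suc m)) j = G.Kv (ut (Suc m)) j"
            unfolding G.Kv_def by (simp add: Dxx_app_eq Km_def)
          have Kd: "G.Kv (\<lambda>j. u m j - ut (Suc m) j) j = G.Kv (u m) j - G.Kv (ut (Suc m)) j"
            by (simp add: G.Kv_diff)
          define Lt where "Lt = lam_tilde x0 L M V \<omega> p (u m)"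
          have g': "(ut (Suc m) j - u m j) / \<tau> = - (G.Kv (ut (Suc m)) j + (Vw j - Lt * \<bar>u m j\<bar> powr (p - 1)) * u m j
              + \<alpha> * (ut (Suc m) j - u m j))" using g unfolding D by (simp add: Lt_def Vw_def)
          have "(1/\<tau>) * (u m j - ut (Suc m) j) = G.Kv (ut (Suc m)) j + (Vw j - Lt * \<bar>u m j\<bar> powr (p - 1)) * u m j
              + \<alpha> * (ut (Suc m) j - u m j)"
            using g' tau by (simp add: field_simps)
          then show "(1/\<tau> + \<alpha>) * (u m j - ut (Suc m) j) + G.Kv (\<lambda>j. u m j - ut (Suc m) j) j
               = G.Av (u m) j - (h * G.ip (G.Av (u m)) (u m) / ((G.qn (u m)) powr (1/(p+1))) powr (p+1)) * (\<bar>u m j\<bar> powr (p-1) * u m j)"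
            unfolding Kd lt[symmetric] Lt_def[symmetric] by (simp add: G.Av_def algebra_simps)
          show "u (Suc m) j = ut (Suc m) j / (G.qn (ut (Suc m))) powr (1 / (p + 1))"
            using g2 by (simp add: qn_eq)
        qed
        have "\<forall>n. G.nrm (\<lambda>j. u n j - us j) \<le> C * exp (- (a * (\<tau> / (1 + \<tau>)) * real n))"
          by (rule conv[of u0 \<tau> u ut]) (use qu0 nu0 tau H rec in blast)
        then have b: "G.nrm (\<lambda>j. u n j - us j) \<le> C * exp (- (a * (\<tau> / (1 + \<tau>)) * real n))" by blast
        have ex: "exp (- (a * (\<tau> / (1 + \<tau>)) * real n)) = exp (- a * real n * \<tau> / (1 + \<tau>))"
          by (simp add: field_simps)
        have "norm1_h x0 L M (\<lambda>j. u n j - us j) \<le> sqrt (h * (1 + 2 * G.sK)) * G.nrm (\<lambda>j. u n j - us j)"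
          by (rule norm1_hi)
        also have "\<dots> \<le> sqrt (h * (1 + 2 * G.sK)) * (C * exp (- (a * (\<tau> / (1 + \<tau>)) * real n)))"
          by (rule mult_left_mono[OF b]) (use h_pos G.sK_nonneg in simp)
        also have "\<dots> \<le> C' * exp (- (a * (\<tau> / (1 + \<tau>)) * real n))"
          by (simp add: C'_def algebra_simps)
        finally show "norm1_h x0 L M (\<lambda>j. u n j - us j) \<le> C' * exp (- a * real n * \<tau> / (1 + \<tau>))"
          unfolding ex .
      qed
    qed
  qed
qed


end
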